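(* Consider problem (rank-MOA) $\min\{f(X):\mathcal{A}(X)=b,\ \operatorname{rank}(X)\le r\}$ and let $X\in\mathcal{L}\cap\mathcal{M}(r)$ with $s=\operatorname{rank}(X)$ and SVD $X=U\Sigma V^\top$ as in the context. (i) Suppose $X$ is a local minimizer of (rank-MOA). If either $s=r$ and Assumption 1 holds at $X$, or $s<r$ and Assumption 2 holds at $X$, then $X$ is an $F$-stationary point of (rank-MOA). (ii) Suppose $f$ is convex and $X$ is an $F$-stationary point of (rank-MOA). If $s=r$, then $f(X)\le f(Y)$ for all $Y\in\mathcal{L}\cap\mathcal{M}_X(\Gamma)$, where $\mathcal{M}_X(\Gamma)=\{UBV_\Gamma^\top:B\in\mathbb{R}^{m\times r}\}$. If $s<r$, then $X$ is a global minimizer of (rank-MOA).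
   Context: $0\le r<n\le m$. $\langle X,Y\rangle=\sum_{i,j}X_{ij}Y_{ij}$. $f:\mathbb{R}^{m\times n}\to\mathbb{R}$ continuously differentiable; $A^1,\dots,A^l\in\mathbb{R}^{m\times n}$, $b\in\mathbb{R}^l$, $\mathcal{A}(X)=(\langle A^1,X\rangle,\dots,\langle A^l,X\rangle)^\top$, $\mathcal{L}=\{X:\mathcal{A}(X)=b\}$, $\mathcal{M}(r)=\{X:\operatorname{rank}X\le r\}$. Lagrangian $L(X;y)=f(X)+\sum_{i=1}^ly_i(\langle A^i,X\rangle-b_i)$. For closed $\Omega$, $X\in\Omega$: $\mathrm{T}^B_\Omega(X)$ is the set of $\Xi$ with $X^k\in\Omega$, $X^k\to X$, $t_k\downarrow0$, $(X^k-X)/t_k\to\Xi$; $\mathrm{N}^F_\Omega(X)=\{Y:\langle Y,\Xi\rangle\le0\ \forall\Xi\in\mathrm{T}^B_\Omega(X)\}$. $X$ is an $F$-stationary point of (rank-MOA) if $X\in\mathcal{M}(r)$ and there is $y\in\mathbb{R}^l$ with $\mathcal{A}(X)=b$ and $-\nabla_XL(X;y)\in\mathrm{N}^F_{\mathcal{M}(r)}(X)$. SVD convention: $X=U\Sigma V^\top$, $U$, $V$ orthogonal of sizes $m$, $n$, $\Sigma$ with diagonal $\sigma_1\ge\dots\ge\sigma_s>0$ followed by zeros, $\Gamma=\{1,\dots,s\}$, $\Gamma_m^\perp=\{s+1,\dots,m\}$, $\Gamma_n^\perp=\{s+1,\dots,n\}$, $U_J,V_J$ column submatrices indexed by $J$.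 $T^i_X=\begin{bmatrix}U_\Gamma^\top A^iV_\Gamma & U_\Gamma^\top A^iV_{\Gamma_n^\perp}\\ U_{\Gamma_m^\perp}^\top A^iV_\Gamma & O\end{bmatrix}$, $R^i_X=U^\top A^iV_\Gamma$. Assumption 1 at $X$: $T^1_X,\dots,T^l_X$ linearly independent. Assumption 2 at $X$: $R^1_X,\dots,R^l_X$ linearly independent. *)

theory Defs
  imports "HOL-Analysis.Analysis"
begin

text \<open>Matrices in R^{m x n} are rendered as real^'n^'m (rows indexed by 'm, columns by 'n).
  The inner product on this type is the Frobenius inner product sum_ij X_ij Y_ij.
  Constraint families A^1..A^l, b, y are indexed by 0..<l.\<close>

definition feas_L :: "nat \<Rightarrow> (nat \<Rightarrow> real^'n^'m) \<Rightarrow> (nat \<Rightarrow> real) \<Rightarrow> (real^'n^'m) set" where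
  "feas_L l A b = {X. \<forall>i<l. A i \<bullet> X = b i}"

definition rank_le :: "nat \<Rightarrow> (real^'n^'m) set" where
  "rank_le r = {X. rank X \<le> r}"

definition bouligand_tangent :: "'a::real_normed_vector set \<Rightarrow> 'a \<Rightarrow> 'a set" where
  "bouligand_tangent \<Omega> X = {\<Xi>. \<exists>Xk t. (\<forall>k. Xk k \<in> \<Omega>) \<and> Xk \<longlonglongrightarrow> X \<and>
      (\<forall>k. t k > (0::real)) \<and> t \<longlonglongrightarrow> 0 \<and> (\<lambda>k. (Xk k - X) /\<^sub>R t k) \<longlonglongrightarrow> \<Xi>}"

definition frechet_normal :: "'a::real_inner set \<Rightarrow> 'a \<Rightarrow> 'a set" where
  "frechet_normal \<Omega> X = {Y. \<forall>\<Xi>\<in>bouligand_tangent \<Omega> X. Y \<bullet> \<Xi> \<le> 0}"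

definition grad :: "('a::real_inner \<Rightarrow> real) \<Rightarrow> 'a \<Rightarrow> 'a" where
  "grad f X = (SOME g. (f has_derivative (\<lambda>H. g \<bullet> H)) (at X))"

definition cont_diff :: "('a::real_inner \<Rightarrow> real) \<Rightarrow> bool" where
  "cont_diff f \<longleftrightarrow> (\<forall>X. f differentiable (at X)) \<and> continuous_on UNIV (grad f)"

text \<open>Gradient in X of the Lagrangian L(X;y) = f(X) + sum_i y_i (<A^i,X> - b_i).\<close>
definition lagr_grad :: "('a::real_inner \<Rightarrow> real) \<Rightarrow> nat \<Rightarrow> (nat \<Rightarrow> 'a) \<Rightarrow> (nat \<Rightarrow> real) \<Rightarrow> 'a \<Rightarrow> 'a" where
  "lagr_grad f l A y X = grad f X + (\<Sum>i<l. y i *\<^sub>R A i)"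

definition F_stationary :: "(real^'n^'m \<Rightarrow> real) \<Rightarrow> nat \<Rightarrow> (nat \<Rightarrow> real^'n^'m) \<Rightarrow> (nat \<Rightarrow> real) \<Rightarrow> nat \<Rightarrow> real^'n^'m \<Rightarrow> bool" where
  "F_stationary f l A b r X \<longleftrightarrow> X \<in> rank_le r \<and>
     (\<exists>y. X \<in> feas_L l A b \<and> - lagr_grad f l A y X \<in> frechet_normal (rank_le r) X)"

definition local_min_on :: "('a::metric_space \<Rightarrow> real) \<Rightarrow> 'a set \<Rightarrow> 'a \<Rightarrow> bool" where
  "local_min_on f S X \<longleftrightarrow> X \<in> S \<and> (\<exists>e>0. \<forall>Y\<in>S. dist Y X < e \<longrightarrow> f X \<le> f Y)"

definition global_min_on :: "('a \<Rightarrow> real) \<Rightarrow> 'a set \<Rightarrow> 'a \<Rightarrow> bool" where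
  "global_min_on f S X \<longleftrightarrow> X \<in> S \<and> (\<forall>Y\<in>S. f X \<le> f Y)"

definition lin_indep_family :: "nat \<Rightarrow> (nat \<Rightarrow> 'a::real_vector) \<Rightarrow> bool" where
  "lin_indep_family l T \<longleftrightarrow> (\<forall>c. (\<Sum>i<l. c i *\<^sub>R T i) = 0 \<longrightarrow> (\<forall>i<l. c i = 0))"

text \<open>SVD convention: em, en enumerate the row / column indices (position k = em k, en k).\<close>
definition is_svd :: "(nat \<Rightarrow> 'm::finite) \<Rightarrow> (nat \<Rightarrow> 'n::finite) \<Rightarrow> real^'n^'m \<Rightarrow> real^'m^'m \<Rightarrow> real^'n^'m \<Rightarrow> real^'n^'n \<Rightarrow> nat \<Rightarrow> bool" where
  "is_svd em en X U S V s \<longleftrightarrow>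
     orthogonal_matrix U \<and> orthogonal_matrix V \<and> X = U ** S ** transpose V \<and>
     (\<forall>i<CARD('m). \<forall>j<CARD('n). i \<noteq> j \<longrightarrow> S $ em i $ en j = 0) \<and>
     (\<forall>i<s. S $ em i $ en i > 0) \<and>
     (\<forall>i j. i \<le> j \<longrightarrow> j < s \<longrightarrow> S $ em j $ en j \<le> S $ em i $ en i) \<and>
     (\<forall>i. s \<le> i \<longrightarrow> i < CARD('n) \<longrightarrow> S $ em i $ en i = 0)"

text \<open>T^i_X, written as an m x n matrix: U^T A^i V with the (Gamma_m^perp, Gamma_n^perp) block set to 0.\<close>
definition T_mat :: "(nat \<Rightarrow> 'm::finite) \<Rightarrow> (nat \<Rightarrow> 'n::finite) \<Rightarrow> nat \<Rightarrow> real^'m^'m \<Rightarrow> real^'n^'n \<Rightarrow> real^'n^'m \<Rightarrow> real^'n^'m" where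
  "T_mat em en s U V Ai = (\<chi> p q. if p \<notin> em ` {..<s} \<and> q \<notin> en ` {..<s} then 0
                                    else (transpose U ** Ai ** V) $ p $ q)"

text \<open>R^i_X = U^T A^i V_Gamma (m x s), embedded as an m x n matrix by zero columns outside Gamma_n.\<close>
definition R_mat :: "(nat \<Rightarrow> 'm::finite) \<Rightarrow> (nat \<Rightarrow> 'n::finite) \<Rightarrow> nat \<Rightarrow> real^'m^'m \<Rightarrow> real^'n^'n \<Rightarrow> real^'n^'m \<Rightarrow> real^'n^'m" where
  "R_mat em en s U V Ai = (\<chi> p q. if q \<in> en ` {..<s} then (transpose U ** Ai ** V) $ p $ q else 0)"

text \<open>M_X(Gamma) = {U B V_Gamma^T : B m x s} = {U B' V^T : B' has zero columns outside Gamma_n}.\<close>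
definition M_Gamma :: "(nat \<Rightarrow> 'n::finite) \<Rightarrow> nat \<Rightarrow> real^'m^'m \<Rightarrow> real^'n^'n \<Rightarrow> (real^'n^'m::finite) set" where
  "M_Gamma en s U V = {U ** B ** transpose V | B. \<forall>p q. q \<notin> en ` {..<s} \<longrightarrow> B $ p $ q = 0}"

end

theory Submission
  imports Defs
begin


lemma inner_mat: "(M::real^'n^'m) \<bullet> N = (\<Sum>i\<in>UNIV. \<Sum>j\<in>UNIV. M$i$j * N$i$j)"
  by (simp add: inner_vec_def)

lemma sum_if_eq1: "(\<Sum>k\<in>(UNIV::'a::finite set). if k = a \<and> Q k then c k else 0) = (if Q a then c a else 0)"
proof -
  have "(\<Sum>k\<in>(UNIV::'a set). if k = a \<and> Q k then c k else 0) = (\<Sum>k\<in>UNIV. if k = a then (if Q a then c a else 0) else 0)"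
    by (rule sum.cong) auto
  then show ?thesis by simp
qed

lemma sum_if_eq2: "(\<Sum>k\<in>(UNIV::'a::finite set). if a = k \<and> Q k then c k else 0) = (if Q a then c a else 0)"
  using sum_if_eq1[of a Q c] by (simp add: eq_commute)

lemma inner_mult_left:
  fixes A :: "real^'m^'k" and Z :: "real^'n^'m" and Y :: "real^'n^'k"
  shows "(A ** Z) \<bullet> Y = Z \<bullet> (transpose A ** Y)"
proof -
  have "(A ** Z) \<bullet> Y = (\<Sum>i\<in>UNIV. \<Sum>j\<in>UNIV. \<Sum>k\<in>UNIV. A$i$k * Z$k$j * Y$i$j)"
    unfolding inner_mat matrix_matrix_mult_def by (simp add: sum_distrib_right)
  also have "\<dots> = (\<Sum>i\<in>UNIV. \<Sum>k\<in>UNIV. \<Sum>j\<in>UNIV. A$i$k * Z$k$j * Y$i$j)"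
    by (rule sum.cong[OF refl], rule sum.swap)
  also have "\<dots> = (\<Sum>k\<in>UNIV. \<Sum>i\<in>UNIV. \<Sum>j\<in>UNIV. A$i$k * Z$k$j * Y$i$j)"
    by (rule sum.swap)
  also have "\<dots> = (\<Sum>k\<in>UNIV. \<Sum>j\<in>UNIV. \<Sum>i\<in>UNIV. A$i$k * Z$k$j * Y$i$j)"
    by (rule sum.cong[OF refl], rule sum.swap)
  also have "\<dots> = Z \<bullet> (transpose A ** Y)"
    unfolding inner_mat matrix_matrix_mult_def transpose_def by (simp add: sum_distrib_left mult_ac)
  finally show ?thesis .
qed

lemma inner_mult_right:
  fixes B :: "real^'k^'n" and Z :: "real^'n^'m" and Y :: "real^'k^'m"
  shows "(Z ** B) \<bullet> Y = Z \<bullet> (Y ** transpose B)"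
proof -
  have "(Z ** B) \<bullet> Y = (\<Sum>i\<in>UNIV. \<Sum>j\<in>UNIV. \<Sum>k\<in>UNIV. Z$i$k * B$k$j * Y$i$j)"
    unfolding inner_mat matrix_matrix_mult_def by (simp add: sum_distrib_right)
  also have "\<dots> = (\<Sum>i\<in>UNIV. \<Sum>k\<in>UNIV. \<Sum>j\<in>UNIV. Z$i$k * B$k$j * Y$i$j)"
    by (rule sum.cong[OF refl], rule sum.swap)
  also have "\<dots> = Z \<bullet> (Y ** transpose B)"
    unfolding inner_mat matrix_matrix_mult_def transpose_def by (simp add: sum_distrib_left mult_ac)
  finally show ?thesis .
qed

definition diagm :: "('a::finite \<Rightarrow> bool) \<Rightarrow> real^'a^'a" where
  "diagm P = (\<chi> i j. if i = j \<and> P i then 1 else 0)"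

lemma diagm_left: "diagm P ** (M::real^'n^'m) = (\<chi> i j. if P i then M$i$j else 0)"
  unfolding diagm_def matrix_matrix_mult_def
  by (simp add: vec_eq_iff if_distrib[of "\<lambda>x. x * _"] sum_if_eq2 cong: if_cong)

lemma diagm_right: "(M::real^'n^'m) ** diagm P = (\<chi> i j. if P j then M$i$j else 0)"
  unfolding diagm_def matrix_matrix_mult_def
  by (simp add: vec_eq_iff if_distrib[of "\<lambda>x. _ * x"] sum_if_eq1 cong: if_cong)

lemma transpose_diagm[simp]: "transpose (diagm P) = diagm P"
  unfolding diagm_def transpose_def by (simp add: vec_eq_iff)


lemma span_sum_form:
  fixes v :: "nat \<Rightarrow> 'a::real_vector"
  assumes "x \<in> span (v ` {..<l})"
  shows "\<exists>c. x = (\<Sum>i<l. c i *\<^sub>R v i)"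
proof -
  have sub: "subspace {x. \<exists>c. x = (\<Sum>i<l. c i *\<^sub>R v i)}"
    unfolding subspace_def
  proof (intro conjI ballI allI)
    show "0 \<in> {x. \<exists>c. x = (\<Sum>i<l. c i *\<^sub>R v i)}"
      by (auto intro!: exI[of _ "\<lambda>_. 0"])
  next
    fix x y assume "x \<in> {x. \<exists>c. x = (\<Sum>i<l. c i *\<^sub>R v i)}" "y \<in> {x. \<exists>c. x = (\<Sum>i<l. c i *\<^sub>R v i)}"
    then obtain c d where "x = (\<Sum>i<l. c i *\<^sub>R v i)" "y = (\<Sum>i<l. d i *\<^sub>R v i)" by auto
    then show "x + y \<in> {x. \<exists>c. x = (\<Sum>i<l. c i *\<^sub>R v i)}"
      by (auto intro!: exI[of _ "\<lambda>i. c i + d i"] simp: sum.distrib scaleR_add_left)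
  next
    fix a x assume "x \<in> {x. \<exists>c. x = (\<Sum>i<l. c i *\<^sub>R v i)}"
    then obtain c where "x = (\<Sum>i<l. c i *\<^sub>R v i)" by auto
    then show "a *\<^sub>R x \<in> {x. \<exists>c. x = (\<Sum>i<l. c i *\<^sub>R v i)}"
      by (auto intro!: exI[of _ "\<lambda>i. a * c i"] simp: scaleR_sum_right)
  qed
  have "v ` {..<l} \<subseteq> {x. \<exists>c. x = (\<Sum>i<l. c i *\<^sub>R v i)}"
  proof
    fix x assume "x \<in> v ` {..<l}"
    then obtain k where k: "k < l" "x = v k" by auto
    have "(\<Sum>i<l. (if i = k then 1 else 0) *\<^sub>R v i) = v k"
      using k by (simp add: if_distrib[of "\<lambda>a. a *\<^sub>R _"] sum.delta cong: if_cong)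
    then show "x \<in> {x. \<exists>c. x = (\<Sum>i<l. c i *\<^sub>R v i)}" using k by (intro CollectI exI[of _ "\<lambda>i. if i = k then 1 else 0"]) simp
  qed
  then show ?thesis using assms span_minimal[OF _ sub] by blast
qed

lemma sum_in_span:
  fixes v :: "nat \<Rightarrow> 'a::real_vector"
  shows "(\<Sum>i<l. c i *\<^sub>R v i) \<in> span (v ` {..<l})"
  by (intro span_sum span_mul span_base) auto

lemma LA_orth:
  fixes a :: "nat \<Rightarrow> 'a::euclidean_space"
  assumes "\<And>x. (\<forall>i<l. a i \<bullet> x = 0) \<Longrightarrow> g \<bullet> x = 0"
  shows "\<exists>c. g = (\<Sum>i<l. c i *\<^sub>R a i)"
proof -
  obtain y z where y: "y \<in> span (a ` {..<l})" and z: "\<And>w. w \<in> span (a ` {..<l}) \<Longrightarrow> orthogonal z w"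
    and g: "g = y + z"
    using orthogonal_subspace_decomp_exists[of "a ` {..<l}" g] by blast
  have "\<forall>i<l. a i \<bullet> z = 0"
    using z by (metis orthogonal_def inner_commute span_base image_eqI lessThan_iff)
  then have "g \<bullet> z = 0" using assms by blast
  moreover have "y \<bullet> z = 0" using z[OF y] by (simp add: orthogonal_def inner_commute)
  ultimately have "z \<bullet> z = 0" by (simp add: g inner_add_left)
  then have "g = y" using g by simp
  then show ?thesis using span_sum_form[OF y] by blast
qed

lemma dual_family:
  fixes R :: "nat \<Rightarrow> 'a::euclidean_space"
  assumes li: "lin_indep_family l R"
  shows "\<exists>D. \<forall>k<l. D k \<in> span (R ` {..<l}) \<and> (\<forall>i<l. R i \<bullet> D k = (if i = k then 1 else 0))"
proof -
  have "\<exists>d. d \<in> span (R ` {..<l}) \<and> (\<forall>i<l. R i \<bullet> d = (if i = k then 1 else 0))" if k: "k < l" for k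
  proof -
    obtain y z where y: "y \<in> span (R ` ({..<l} - {k}))"
      and z: "\<And>w. w \<in> span (R ` ({..<l} - {k})) \<Longrightarrow> orthogonal z w"
      and g: "R k = y + z"
      using orthogonal_subspace_decomp_exists[of "R ` ({..<l} - {k})" "R k"] by blast
    have zR: "z \<bullet> R i = 0" if "i < l" "i \<noteq> k" for i
      using z[of "R i"] that by (auto simp: orthogonal_def intro: span_base)
    have yz: "y \<bullet> z = 0" using z[OF y] by (simp add: orthogonal_def inner_commute)
    have zne: "z \<noteq> 0"
    proof
      assume z0: "z = 0"
      have y2: "y \<in> span ((\<lambda>i. if i = k then 0 else R i) ` {..<l})"
      proof -
        have ss: "R ` ({..<l} - {k}) \<subseteq> (\<lambda>i. if i = k then 0 else R i) ` {..<l}" by force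
        show ?thesis using span_mono[OF ss] y by (rule subsetD)
      qed
      obtain c where c: "y = (\<Sum>i<l. c i *\<^sub>R (if i = k then 0 else R i))"
        using span_sum_form[OF y2] by blast
      define c' where "c' = (\<lambda>i. if i = k then -1 else c i)"
      have "(\<Sum>i<l. c' i *\<^sub>R R i) = (\<Sum>i<l. c i *\<^sub>R (if i = k then 0 else R i)) - R k"
      proof -
        have "(\<Sum>i<l. c' i *\<^sub>R R i) = (\<Sum>i<l. c i *\<^sub>R (if i = k then 0 else R i) + (if i = k then - R k else 0))"
          by (rule sum.cong) (auto simp: c'_def)
        also have "\<dots> = (\<Sum>i<l. c i *\<^sub>R (if i = k then 0 else R i)) - R k"
          using k by (simp add: sum.distrib sum.delta)
        finally show ?thesis .
      qed
      also have "\<dots> = 0" using c g z0 by simp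
      finally have sc: "(\<Sum>i<l. c' i *\<^sub>R R i) = 0" .
      have "c' k = 0" using li[unfolded lin_indep_family_def, rule_format, OF sc] k by simp
      then show False by (simp add: c'_def)
    qed
    have zk: "z \<bullet> R k = z \<bullet> z"
      using g yz by (simp add: inner_add_right inner_commute)
    have zz: "z \<bullet> z \<noteq> 0" using zne by simp
    define d where "d = (1 / (z \<bullet> z)) *\<^sub>R z"
    have "z \<in> span (R ` {..<l})"
    proof -
      have "z = R k - y" using g by simp
      moreover have "R k \<in> span (R ` {..<l})" using k by (auto intro: span_base)
      moreover have "y \<in> span (R ` {..<l})" using y span_mono[of "R ` ({..<l} - {k})" "R ` {..<l}"] by (meson Diff_subset image_mono in_mono)
      ultimately show ?thesis by (simp add: span_diff)
    qed
    then have "d \<in> span (R ` {..<l})" by (simp add: d_def span_mul)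
    moreover have "\<forall>i<l. R i \<bullet> d = (if i = k then 1 else 0)"
      using zR zk zz by (auto simp: d_def inner_commute)
    ultimately show ?thesis by blast
  qed
  then have "\<forall>k. \<exists>d. k < l \<longrightarrow> d \<in> span (R ` {..<l}) \<and> (\<forall>i<l. R i \<bullet> d = (if i = k then 1 else 0))"
    by blast
  from choice[OF this] obtain D where DD:
    "\<forall>k. k < l \<longrightarrow> D k \<in> span (R ` {..<l}) \<and> (\<forall>i<l. R i \<bullet> D k = (if i = k then 1 else 0))"
    by blast
  show ?thesis by (rule exI[where x=D], fact DD)
qed


lemma grad_has_derivative:
  fixes f :: "'a::euclidean_space \<Rightarrow> real"
  assumes "f differentiable (at X)"
  shows "(f has_derivative (\<lambda>H. grad f X \<bullet> H)) (at X)"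
proof -
  obtain f' where f': "(f has_derivative f') (at X)" using assms unfolding differentiable_def by blast
  have bl: "linear f'" using has_derivative_bounded_linear[OF f'] bounded_linear.linear by blast
  define g where "g = (\<Sum>b\<in>Basis. f' b *\<^sub>R b)"
  have "f' H = g \<bullet> H" for H
  proof -
    have "f' H = f' (\<Sum>b\<in>Basis. (H \<bullet> b) *\<^sub>R b)" by (simp add: euclidean_representation)
    also have "\<dots> = (\<Sum>b\<in>Basis. (H \<bullet> b) * f' b)"
      by (simp add: linear_sum[OF bl] linear_scale[OF bl])
    also have "\<dots> = g \<bullet> H" unfolding g_def inner_sum_left inner_scaleR_left
      by (intro sum.cong refl) (metis inner_commute mult.commute)
    finally show ?thesis .
  qed
  then have "f' = (\<lambda>H. g \<bullet> H)" by auto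
  then have ex: "\<exists>g. (f has_derivative (\<lambda>H. g \<bullet> H)) (at X)" using f' by blast
  show ?thesis unfolding grad_def by (rule someI_ex[OF ex])
qed

lemma convex_grad_ineq:
  fixes f :: "'a::euclidean_space \<Rightarrow> real"
  assumes cv: "convex_on UNIV f" and d: "(f has_derivative (\<lambda>H. g \<bullet> H)) (at X)"
  shows "f X + g \<bullet> (Y - X) \<le> f Y"
proof -
  define h where "h = (\<lambda>t::real. f (X + t *\<^sub>R (Y - X)))"
  have cvh: "convex_on UNIV h"
  proof (rule convex_onI)
    fix t x y :: real assume t: "t > 0" "t < 1"
    have "h ((1 - t) *\<^sub>R x + t *\<^sub>R y) = f ((1 - t) *\<^sub>R (X + x *\<^sub>R (Y - X)) + t *\<^sub>R (X + y *\<^sub>R (Y - X)))"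
      unfolding h_def by (simp add: algebra_simps)
    also have "\<dots> \<le> (1 - t) * f (X + x *\<^sub>R (Y - X)) + t * f (X + y *\<^sub>R (Y - X))"
      using convex_onD[OF cv, of t] t by simp
    finally show "h ((1 - t) *\<^sub>R x + t *\<^sub>R y) \<le> (1 - t) * h x + t * h y" unfolding h_def by simp
  qed simp
  have d1: "((\<lambda>t::real. X + t *\<^sub>R (Y - X)) has_derivative (\<lambda>t. t *\<^sub>R (Y - X))) (at 0)"
    by (auto intro!: derivative_eq_intros)
  have d2: "(f has_derivative (\<lambda>H. g \<bullet> H)) (at (X + 0 *\<^sub>R (Y - X)))" using d by simp
  have "(h has_derivative (\<lambda>t. g \<bullet> (t *\<^sub>R (Y - X)))) (at 0)"
    unfolding h_def by (rule has_derivative_compose[OF d1 d2])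
  then have "(h has_derivative (*) (g \<bullet> (Y - X))) (at 0)"
    by (rule has_derivative_eq_rhs) (auto simp: fun_eq_iff)
  then have "(h has_field_derivative (g \<bullet> (Y - X))) (at 0 within UNIV)"
    unfolding has_field_derivative_def by simp
  from convex_on_imp_above_tangent[OF cvh _ _ _ this, of 1]
  have "h 1 - h 0 \<ge> g \<bullet> (Y - X)" by simp
  then show ?thesis unfolding h_def by simp
qed

lemma local_min_dir:
  fixes f :: "'a::euclidean_space \<Rightarrow> real"
  assumes d: "(f has_derivative (\<lambda>H. g \<bullet> H)) (at X)" and lm: "local_min_on f K X"
    and dpos: "\<delta> > 0"
    and curve: "\<And>t. 0 < t \<Longrightarrow> t < \<delta> \<Longrightarrow> X + t *\<^sub>R \<Xi> + R t \<in> K \<and> norm (R t) \<le> C * t^2"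
  shows "g \<bullet> \<Xi> \<ge> 0"
proof (rule ccontr)
  assume "\<not> g \<bullet> \<Xi> \<ge> 0"
  define a where "a = - (g \<bullet> \<Xi>)"
  have a: "a > 0" using \<open>\<not> g \<bullet> \<Xi> \<ge> 0\<close> by (simp add: a_def)
  obtain e0 where e0: "e0 > 0" "\<And>Y. Y \<in> K \<Longrightarrow> dist Y X < e0 \<Longrightarrow> f X \<le> f Y"
    using lm unfolding local_min_on_def by blast
  define N where "N = norm \<Xi> + 1"
  have N: "N > 0" "norm \<Xi> \<le> N" unfolding N_def using norm_ge_zero[of \<Xi>] by linarith+
  define C' where "C' = \<bar>C\<bar> + 1"
  have C': "C' > 0" "C \<le> C'" by (auto simp: C'_def)
  define G where "G = norm g + 1"
  have G: "G > 0" "norm g \<le> G" unfolding G_def using norm_ge_zero[of g] by linarith+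
  have aN: "a / (4 * N) > 0" using a N by simp
  have "\<forall>e>0. \<exists>d>0. \<forall>y. norm (y - X) < d \<longrightarrow> norm (f y - f X - g \<bullet> (y - X)) \<le> e * norm (y - X)"
    using d[unfolded has_derivative_at_alt] by blast
  then obtain dd where dd: "dd > 0" "\<And>y. norm (y - X) < dd \<Longrightarrow> norm (f y - f X - g \<bullet> (y - X)) \<le> (a / (4 * N)) * norm (y - X)"
    using aN by blast
  define t where "t = Min {\<delta> / 2, 1 / C', dd / (2 * N), e0 / (2 * N), a / (4 * G * C')}"
  have tpos: "t > 0" unfolding t_def using dpos C' dd N e0 a G by auto
  have t1: "t < \<delta>" "t \<le> 1 / C'" "t \<le> dd / (2 * N)" "t \<le> e0 / (2 * N)" "t \<le> a / (4 * G * C')"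
    unfolding t_def using dpos by auto
  have inK: "X + t *\<^sub>R \<Xi> + R t \<in> K" and nR: "norm (R t) \<le> C * t^2" using curve[OF tpos t1(1)] by auto
  have "C * t^2 \<le> C' * t^2" by (rule mult_right_mono) (use C' in auto)
  then have nR2: "norm (R t) \<le> C' * t * t" using nR by (simp add: power2_eq_square mult.assoc)
  have "C' * t \<le> 1" using t1(2) C' by (simp add: field_simps)
  then have "C' * t * t \<le> 1 * t" using tpos by (intro mult_right_mono) auto
  then have nR3: "norm (R t) \<le> t" using nR2 by simp
  define y where "y = X + t *\<^sub>R \<Xi> + R t"
  have ny: "norm (y - X) \<le> t * N"
  proof -
    have "y - X = t *\<^sub>R \<Xi> + R t" by (simp add: y_def)
    then have "norm (y - X) \<le> norm (t *\<^sub>R \<Xi>) + norm (R t)"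
      using norm_triangle_ineq by metis
    also have "\<dots> \<le> t * norm \<Xi> + t" using nR3 tpos by simp
    also have "\<dots> = t * N" by (simp add: N_def algebra_simps)
    finally show ?thesis .
  qed
  have "t * (2 * N) \<le> dd" "t * (2 * N) \<le> e0"
    using t1(3,4) N by (simp_all add: pos_le_divide_eq)
  then have tN: "t * N < dd" "t * N < e0"
    using N tpos dd e0 by (simp_all add: algebra_simps)
  have "f X \<le> f y" using e0(2)[of y] inK ny tN by (simp add: y_def dist_norm)
  moreover have "f y - f X - g \<bullet> (y - X) \<le> (a / (4 * N)) * norm (y - X)"
    using dd(2)[of y] ny tN abs_le_D1 unfolding real_norm_def by fastforce
  moreover have "(a / (4 * N)) * norm (y - X) \<le> (a / (4 * N)) * (t * N)"
    using ny a N by (intro mult_left_mono) auto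
  moreover have "(a / (4 * N)) * (t * N) = a * t / 4" using N by (simp add: field_simps)
  moreover have "g \<bullet> (y - X) = - a * t + g \<bullet> R t" by (simp add: y_def a_def inner_add_right)
  moreover have "g \<bullet> R t \<le> G * (C' * t * t)"
  proof -
    have "g \<bullet> R t \<le> norm g * norm (R t)" by (rule order_trans[OF _ norm_cauchy_schwarz]) simp
    also have "\<dots> \<le> G * (C' * t * t)" using G nR2 by (intro mult_mono) auto
    finally show ?thesis .
  qed
  moreover have "G * (C' * t * t) \<le> a * t / 4"
  proof -
    have "G * C' * t \<le> a / 4" using t1(5) G C' by (simp add: field_simps)
    then have "G * C' * t * t \<le> a / 4 * t" using tpos by (intro mult_right_mono) auto
    then show ?thesis by (simp add: algebra_simps)
  qed
  ultimately have "f y - f X \<le> - a * t / 2"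
    by linarith
  moreover have "a * t > 0" using a tpos by simp
  ultimately show False using \<open>f X \<le> f y\<close> by linarith
qed


lemma sum_single:
  assumes "finite A" "a \<in> A" "\<And>x. x \<in> A \<Longrightarrow> x \<noteq> a \<Longrightarrow> f x = 0"
  shows "sum f A = f a"
proof -
  have "sum f A = f a + sum f (A - {a})" using assms by (simp add: sum.remove)
  also have "sum f (A - {a}) = 0" using assms by (intro sum.neutral) auto
  finally show ?thesis by simp
qed

lemma rank_cols:
  fixes M :: "real^'n^'m"
  assumes "\<And>i j. \<not> P j \<Longrightarrow> M$i$j = 0"
  shows "rank M \<le> card {j. P j}"
proof -
  have "columns M \<subseteq> span ((\<lambda>j. column j M) ` {j. P j})"
  proof
    fix x assume "x \<in> columns M"
    then obtain j where j: "x = column j M" unfolding columns_def by blast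
    show "x \<in> span ((\<lambda>j. column j M) ` {j. P j})"
    proof (cases "P j")
      case True then show ?thesis using j by (auto intro: span_base)
    next
      case False
      then have "x = 0" using j assms by (simp add: column_def vec_eq_iff)
      then show ?thesis by (simp add: span_zero)
    qed
  qed
  then have "dim (columns M) \<le> card ((\<lambda>j. column j M) ` {j. P j})"
    by (intro dim_le_card) auto
  also have "\<dots> \<le> card {j. P j}" by (rule card_image_le) simp
  finally show ?thesis by (simp add: column_rank_def)
qed

definition rs :: "real^'n^'m \<Rightarrow> 'm \<Rightarrow> bool" where "rs S p \<longleftrightarrow> (\<exists>q. S$p$q \<noteq> 0)"
definition cs :: "real^'n^'m \<Rightarrow> 'n \<Rightarrow> bool" where "cs S q \<longleftrightarrow> (\<exists>p. S$p$q \<noteq> 0)"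
definition pinv :: "real^'n^'m \<Rightarrow> real^'m^'n" where
  "pinv S = (\<chi> q p. if S$p$q \<noteq> 0 then 1 / S$p$q else 0)"

definition monomial :: "real^'n^'m \<Rightarrow> bool" where
  "monomial S \<longleftrightarrow> (\<forall>p q q'. S$p$q \<noteq> 0 \<longrightarrow> S$p$q' \<noteq> 0 \<longrightarrow> q = q') \<and>
                    (\<forall>p p' q. S$p$q \<noteq> 0 \<longrightarrow> S$p'$q \<noteq> 0 \<longrightarrow> p = p')"

context fixes S :: "real^'n^'m" assumes mS: "monomial S"
begin

lemma mono_row: "S$p$q \<noteq> 0 \<Longrightarrow> S$p$q' \<noteq> 0 \<Longrightarrow> q = q'" using mS unfolding monomial_def by blast
lemma mono_col: "S$p$q \<noteq> 0 \<Longrightarrow> S$p'$q \<noteq> 0 \<Longrightarrow> p = p'" using mS unfolding monomial_def by blast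

lemma S_pinv: "S ** pinv S = diagm (rs S)"
proof -
  have "(\<Sum>q\<in>UNIV. S$p$q * pinv S$q$p') = (if p = p' \<and> rs S p then 1 else 0)" for p p'
  proof (cases "rs S p")
    case True
    then obtain q0 where q0: "S$p$q0 \<noteq> 0" unfolding rs_def by blast
    have "(\<Sum>q\<in>UNIV. S$p$q * pinv S$q$p') = S$p$q0 * pinv S$q0$p'"
    proof (rule sum_single)
      fix q assume "q \<noteq> q0"
      then have "S$p$q = 0" using mono_row[OF q0, of q] by blast
      then show "S$p$q * pinv S$q$p' = 0" by simp
    qed auto
    also have "\<dots> = (if p = p' then 1 else 0)"
    proof (cases "p = p'")
      case False
      then have "S$p'$q0 = 0" using mono_col[OF q0, of p'] by blast
      then show ?thesis using False by (simp add: pinv_def)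
    qed (use q0 in \<open>simp add: pinv_def\<close>)
    finally show ?thesis using True by simp
  next
    case False
    then show ?thesis unfolding rs_def by auto
  qed
  then show ?thesis by (simp add: matrix_matrix_mult_def diagm_def vec_eq_iff)
qed

lemma pinv_S: "pinv S ** S = diagm (cs S)"
proof -
  have "(\<Sum>p\<in>UNIV. pinv S$q$p * S$p$q') = (if q = q' \<and> cs S q then 1 else 0)" for q q'
  proof (cases "cs S q")
    case True
    then obtain p0 where p0: "S$p0$q \<noteq> 0" unfolding cs_def by blast
    have "(\<Sum>p\<in>UNIV. pinv S$q$p * S$p$q') = pinv S$q$p0 * S$p0$q'"
    proof (rule sum_single)
      fix p assume "p \<noteq> p0"
      then have "S$p$q = 0" using mono_col[OF p0, of p] by blast
      then show "pinv S$q$p * S$p$q' = 0" by (simp add: pinv_def)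
    qed auto
    also have "\<dots> = (if q = q' then 1 else 0)"
    proof (cases "q = q'")
      case False
      then have "S$p0$q' = 0" using mono_row[OF p0, of q'] by blast
      then show ?thesis using False by (simp add: pinv_def)
    qed (use p0 in \<open>simp add: pinv_def\<close>)
    finally show ?thesis using True by simp
  next
    case False
    then show ?thesis unfolding cs_def by (auto simp: pinv_def)
  qed
  then show ?thesis by (simp add: matrix_matrix_mult_def diagm_def vec_eq_iff)
qed

lemma S_diag_cs: "S ** diagm (cs S) = S"
  by (auto simp: diagm_right vec_eq_iff cs_def)
lemma diag_rs_S: "diagm (rs S) ** S = S"
  by (auto simp: diagm_left vec_eq_iff rs_def)
lemma pinv_diag_rs: "pinv S ** diagm (rs S) = pinv S"
  by (auto simp: diagm_right vec_eq_iff rs_def pinv_def)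
lemma diag_cs_pinv: "diagm (cs S) ** pinv S = pinv S"
  by (auto simp: diagm_left vec_eq_iff cs_def pinv_def)

end


lemma bilinear_mm: "bilinear (\<lambda>(A::real^'k^'m) (B::real^'n^'k). A ** B)"
  unfolding bilinear_def
  by (auto intro!: linearI simp: vec_eq_iff matrix_matrix_mult_def sum.distrib
      sum_distrib_left algebra_simps)

lemma bilinear_mv: "bilinear (\<lambda>(A::real^'n^'m) (x::real^'n). A *v x)"
  unfolding bilinear_def
  by (auto intro!: linearI simp: vec_eq_iff matrix_vector_mult_def sum.distrib
      sum_distrib_left algebra_simps)

lemma bb_mm: "bounded_bilinear (\<lambda>(A::real^'k^'m) (B::real^'n^'k). A ** B)"
  using bilinear_mm bilinear_conv_bounded_bilinear by blast

lemma bb_mv: "bounded_bilinear (\<lambda>(A::real^'n^'m) (x::real^'n). A *v x)"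
  using bilinear_mv bilinear_conv_bounded_bilinear by blast

lemma mm_bound: "\<exists>B>0. \<forall>(A::real^'k^'m) (C::real^'n^'k). norm (A ** C) \<le> B * norm A * norm C"
  using bilinear_bounded_pos[OF bilinear_mm] by blast

lemma mv_bound: "\<exists>B>0. \<forall>(A::real^'n^'m) (x::real^'n). norm (A *v x) \<le> B * norm A * norm x"
  using bilinear_bounded_pos[OF bilinear_mv] by blast

lemmas mm_ladd = bilinear_ladd[OF bilinear_mm, simplified]
lemmas mm_radd = bilinear_radd[OF bilinear_mm, simplified]
lemmas mm_lsub = bilinear_lsub[OF bilinear_mm, simplified]
lemmas mm_rsub = bilinear_rsub[OF bilinear_mm, simplified]
lemmas mm_lmul = bilinear_lmul[OF bilinear_mm, simplified]
lemmas mm_rmul = bilinear_rmul[OF bilinear_mm, simplified]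

lemma mm_lsum: "(\<Sum>i<l. c i *\<^sub>R M i) ** (D::real^'n^'k) = (\<Sum>i<l. c i *\<^sub>R (M i ** D))"
  for M :: "nat \<Rightarrow> real^'k^'m"
  by (induction l) (simp_all add: mm_ladd mm_lmul)

lemma mm_rsum: "(D::real^'k^'m) ** (\<Sum>i<l. c i *\<^sub>R M i) = (\<Sum>i<l. c i *\<^sub>R (D ** M i))"
  for M :: "nat \<Rightarrow> real^'n^'k"
  by (induction l) (simp_all add: mm_radd mm_rmul)

lemma mm_lzero[simp]: "(0::real^'k^'m) ** (D::real^'n^'k) = 0"
  by (simp add: vec_eq_iff matrix_matrix_mult_def)
lemma mm_rzero[simp]: "(D::real^'k^'m) ** (0::real^'n^'k) = 0"
  by (simp add: vec_eq_iff matrix_matrix_mult_def)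

definition emat :: "'m \<Rightarrow> 'n \<Rightarrow> real^'n^'m" where
  "emat p q = (\<chi> i j. if i = p \<and> j = q then 1 else 0)"

lemma inner_emat: "(M::real^'n^'m) \<bullet> emat p q = M$p$q"
proof -
  have "M \<bullet> emat p q = (\<Sum>i\<in>UNIV. \<Sum>j\<in>UNIV. if i = p \<and> j = q then M$i$j else 0)"
    unfolding inner_mat emat_def by (auto intro!: sum.cong)
  also have "\<dots> = (\<Sum>i\<in>UNIV. if i = p then M$i$q else 0)"
    by (intro sum.cong refl) (auto simp: if_distrib sum_if_eq1 cong: if_cong)
  also have "\<dots> = M$p$q" by simp
  finally show ?thesis .
qed

lemma inner_emat': "emat p q \<bullet> (M::real^'n^'m) = M$p$q"
  using inner_emat[of M p q] by (simp add: inner_commute)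

lemma orth_tU: "orthogonal_matrix U \<Longrightarrow> transpose U ** U = mat 1"
  by (simp add: orthogonal_matrix_def)
lemma orth_Ut: "orthogonal_matrix U \<Longrightarrow> U ** transpose U = mat 1"
  by (metis matrix_left_right_inverse orthogonal_matrix_def)

definition Phi :: "real^'m^'m \<Rightarrow> real^'n^'n \<Rightarrow> real^'n^'m \<Rightarrow> real^'n^'m" where
  "Phi U V Z = U ** Z ** transpose V"
definition Psi :: "real^'m^'m \<Rightarrow> real^'n^'n \<Rightarrow> real^'n^'m \<Rightarrow> real^'n^'m" where
  "Psi U V Y = transpose U ** Y ** V"

context fixes U :: "real^'m^'m" and V :: "real^'n^'n"
  assumes oU: "orthogonal_matrix U" and oV: "orthogonal_matrix V"
begin

lemma Phi_Psi[simp]: "Phi U V (Psi U V Y) = Y"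
proof -
  have "Phi U V (Psi U V Y) = (U ** transpose U) ** Y ** (V ** transpose V)"
    unfolding Phi_def Psi_def by (simp add: matrix_mul_assoc)
  then show ?thesis by (simp add: orth_Ut[OF oU] orth_Ut[OF oV])
qed

lemma Psi_Phi[simp]: "Psi U V (Phi U V Z) = Z"
proof -
  have "Psi U V (Phi U V Z) = (transpose U ** U) ** Z ** (transpose V ** V)"
    unfolding Phi_def Psi_def by (simp add: matrix_mul_assoc)
  then show ?thesis by (simp add: orth_tU[OF oU] orth_tU[OF oV])
qed

lemma Phi_inner: "Phi U V Z \<bullet> Y = Z \<bullet> Psi U V Y"
proof -
  have "Phi U V Z \<bullet> Y = (U ** Z) \<bullet> (Y ** V)"
    unfolding Phi_def using inner_mult_right[of "U ** Z" "transpose V" Y] by simp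
  also have "\<dots> = Z \<bullet> (transpose U ** (Y ** V))" by (rule inner_mult_left)
  finally show ?thesis unfolding Psi_def by (simp add: matrix_mul_assoc)
qed

lemma Psi_inner: "Psi U V Y \<bullet> Z = Y \<bullet> Phi U V Z"
  by (metis Phi_inner Psi_Phi Phi_Psi inner_commute)

lemma rank_Phi: "rank (Phi U V Z) \<le> rank Z"
  unfolding Phi_def using rank_mul_le_left rank_mul_le_right order_trans by metis

lemma linear_Phi: "linear (Phi U V)"
  unfolding Phi_def by (auto intro!: linearI simp: mm_ladd mm_radd mm_lmul mm_rmul)

lemma linear_Psi: "linear (Psi U V)"
  unfolding Psi_def by (auto intro!: linearI simp: mm_ladd mm_radd mm_lmul mm_rmul)

lemma norm_Phi: "norm (Phi U V Z) = norm Z"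
proof -
  have "norm (Phi U V Z) ^ 2 = Phi U V Z \<bullet> Phi U V Z" by (simp add: power2_norm_eq_inner)
  also have "\<dots> = Z \<bullet> Z" by (simp add: Phi_inner)
  finally show ?thesis by (simp add: power2_norm_eq_inner[symmetric])
qed

end


definition PT :: "real^'n^'m \<Rightarrow> real^'n^'m \<Rightarrow> real^'n^'m" where
  "PT S G = (\<chi> p q. if rs S p \<or> cs S q then G$p$q else 0)"

definition Jc :: "real^'n^'m \<Rightarrow> real^'n^'n" where
  "Jc S = diagm (\<lambda>q. \<not> cs S q)"

definition Qf :: "real^'n^'m \<Rightarrow> real^'n^'m \<Rightarrow> real^'n^'m" where
  "Qf S G = G ** pinv S ** (G ** Jc S)"

lemma linear_PT: "linear (PT S)"
  unfolding PT_def by (auto intro!: linearI simp: vec_eq_iff)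

lemma PT_idem[simp]: "PT S (PT S G) = PT S G"
  unfolding PT_def by (simp add: vec_eq_iff)

lemma PT_adj: "PT S a \<bullet> x = a \<bullet> PT S x"
  unfolding PT_def inner_mat by (auto intro!: sum.cong)

lemma curve_identity:
  assumes mS: "monomial S"
  shows "(S + G) ** pinv S ** (S + G ** Jc S) = S + PT S G + Qf S G"
proof -
  have "(S + G) ** pinv S ** (S + G ** Jc S) =
        S ** pinv S ** S + G ** pinv S ** S + S ** pinv S ** (G ** Jc S) + Qf S G"
    unfolding Qf_def by (simp add: mm_ladd mm_radd algebra_simps)
  also have "S ** pinv S ** S = S" using S_pinv[OF mS] diag_rs_S[OF mS] by simp
  also have "G ** pinv S ** S = G ** diagm (cs S)"
    using pinv_S[OF mS] by (simp flip: matrix_mul_assoc)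
  also have "S ** pinv S ** (G ** Jc S) = diagm (rs S) ** (G ** Jc S)"
    using S_pinv[OF mS] by simp
  finally have eq: "(S + G) ** pinv S ** (S + G ** Jc S) =
        S + G ** diagm (cs S) + diagm (rs S) ** (G ** Jc S) + Qf S G" .
  have "G ** diagm (cs S) + diagm (rs S) ** (G ** Jc S) = PT S G"
    unfolding Jc_def PT_def by (simp add: diagm_left diagm_right vec_eq_iff)
  then show ?thesis using eq by (simp add: add.assoc)
qed


lemma Qf_bound:
  fixes S :: "real^'n^'m"
  shows "\<exists>Kq>0. \<forall>G. norm (Qf S G) \<le> Kq * norm G ^ 2"
proof -
  obtain B1 where B1: "B1 > 0" "\<forall>(A::real^'m^'m) (C::real^'n^'m). norm (A ** C) \<le> B1 * norm A * norm C"
    using mm_bound by blast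
  obtain B2 where B2: "B2 > 0" "\<forall>(A::real^'n^'m) (C::real^'m^'n). norm (A ** C) \<le> B2 * norm A * norm C"
    using mm_bound by blast
  obtain B3 where B3: "B3 > 0" "\<forall>(A::real^'n^'m) (C::real^'n^'n). norm (A ** C) \<le> B3 * norm A * norm C"
    using mm_bound by blast
  define Kq where "Kq = B1 * B2 * B3 * (norm (pinv S) + 1) * (norm (Jc S) + 1)"
  have Kq: "Kq > 0" unfolding Kq_def using B1 B2 B3
    by (intro mult_pos_pos) (auto intro: add_nonneg_pos)
  have "norm (Qf S G) \<le> Kq * norm G ^ 2" for G
  proof -
    have "norm (Qf S G) \<le> B1 * norm (G ** pinv S) * norm (G ** Jc S)"
      unfolding Qf_def using B1 by blast
    also have "\<dots> \<le> B1 * (B2 * norm G * norm (pinv S)) * (B3 * norm G * norm (Jc S))"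
      using B1 B2 B3 by (intro mult_mono mult_left_mono) (auto intro!: mult_nonneg_nonneg)
    also have "\<dots> \<le> B1 * (B2 * norm G * (norm (pinv S) + 1)) * (B3 * norm G * (norm (Jc S) + 1))"
      using B1 B2 B3 by (intro mult_mono mult_left_mono) (auto intro!: mult_nonneg_nonneg)
    also have "\<dots> = Kq * norm G ^ 2" unfolding Kq_def by (simp add: power2_eq_square algebra_simps)
    finally show ?thesis .
  qed
  then show ?thesis using Kq by blast
qed

lemma continuous_Qf: "continuous_on UNIV (\<lambda>W. Qf S (G0 + W))"
  unfolding Qf_def
  by (intro bounded_bilinear.continuous_on[OF bb_mm] continuous_intros)


lemma norm_sum_inner_bound:
  fixes A D :: "nat \<Rightarrow> 'a::real_inner"
  shows "norm (\<Sum>k<l. (A k \<bullet> Q) *\<^sub>R D k) \<le> (\<Sum>k<l. norm (A k) * norm (D k)) * norm Q"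
proof -
  have "norm (\<Sum>k<l. (A k \<bullet> Q) *\<^sub>R D k) \<le> (\<Sum>k<l. norm ((A k \<bullet> Q) *\<^sub>R D k))"
    by (rule norm_sum)
  also have "\<dots> \<le> (\<Sum>k<l. norm (A k) * norm (D k) * norm Q)"
  proof (rule sum_mono)
    fix k
    have "norm ((A k \<bullet> Q) *\<^sub>R D k) = \<bar>A k \<bullet> Q\<bar> * norm (D k)" by simp
    also have "\<dots> \<le> (norm (A k) * norm Q) * norm (D k)"
      by (intro mult_right_mono Cauchy_Schwarz_ineq2) auto
    finally show "norm ((A k \<bullet> Q) *\<^sub>R D k) \<le> norm (A k) * norm (D k) * norm Q"
      by (simp add: algebra_simps)
  qed
  also have "\<dots> = (\<Sum>k<l. norm (A k) * norm (D k)) * norm Q" by (simp add: sum_distrib_right)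
  finally show ?thesis .
qed

lemma dual_sum:
  fixes A D :: "nat \<Rightarrow> 'a::real_inner"
  assumes "\<forall>i<l. \<forall>k<l. A i \<bullet> D k = (if i = k then 1 else 0)" "i < l"
  shows "A i \<bullet> (\<Sum>k<l. c k *\<^sub>R D k) = c i"
proof -
  have "A i \<bullet> (\<Sum>k<l. c k *\<^sub>R D k) = (\<Sum>k<l. c k * (A i \<bullet> D k))"
    by (simp add: inner_sum_right)
  also have "\<dots> = (\<Sum>k<l. if k = i then c k else 0)"
    using assms by (intro sum.cong refl) auto
  also have "\<dots> = c i" using assms(2) by simp
  finally show ?thesis .
qed

lemma curve_exists:
  fixes S H :: "real^'n^'m" and A D :: "nat \<Rightarrow> real^'n^'m"
  assumes mS: "monomial S" and PH: "PT S H = H" and PD: "\<forall>k<l. PT S (D k) = D k"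
    and dual: "\<forall>i<l. \<forall>k<l. A i \<bullet> D k = (if i = k then 1 else 0)"
    and AH: "\<forall>i<l. A i \<bullet> H = 0"
  shows "\<exists>\<delta>>0. \<exists>C. \<forall>t. 0 < t \<and> t < \<delta> \<longrightarrow> (\<exists>W'. rank (S + t *\<^sub>R H + W') \<le> rank (pinv S) \<and>
            (\<forall>i<l. A i \<bullet> (t *\<^sub>R H + W') = 0) \<and> norm W' \<le> C * t^2)"
proof -
  obtain Kq where Kq: "Kq > 0" "\<And>G. norm (Qf S G) \<le> Kq * norm G ^ 2" using Qf_bound by blast
  define KA where "KA = (\<Sum>k<l. norm (A k) * norm (D k))"
  have KA: "KA \<ge> 0" unfolding KA_def by (intro sum_nonneg) auto
  define K where "K = (KA + 1) * Kq"
  have K1: "K > 0" unfolding K_def using KA Kq by (intro mult_pos_pos) auto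
  have "KA * Kq \<ge> 0" using KA Kq by simp
  then have K: "K > 0" "KA * Kq \<le> K" "Kq \<le> K" using K1 unfolding K_def
    using Kq by (auto simp: algebra_simps)
  define h where "h = norm H + 1"
  have h: "h > 0" "norm H \<le> h" unfolding h_def using norm_ge_zero[of H] by linarith+
  define \<delta> where "\<delta> = 1 / (4 * K * h)"
  have \<delta>: "\<delta> > 0" unfolding \<delta>_def using K h by simp
  define C where "C = 8 * K * h^2"
  have main: "\<exists>W'. rank (S + t *\<^sub>R H + W') \<le> rank (pinv S) \<and>
            (\<forall>i<l. A i \<bullet> (t *\<^sub>R H + W') = 0) \<and> norm W' \<le> C * t^2" if t: "0 < t" "t < \<delta>" for t
  proof -
    define \<rho> where "\<rho> = 4 * K * h^2 * t^2"
    have \<rho>: "\<rho> > 0" unfolding \<rho>_def using K h t by simp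
    have "4 * K * h * t < 1" using t(2) K h by (simp add: \<delta>_def field_simps)
    then have "4 * K * h * t * (h * t) \<le> 1 * (h * t)" using h t by (intro mult_right_mono) auto
    then have \<rho>ht: "\<rho> \<le> h * t" unfolding \<rho>_def by (simp add: power2_eq_square algebra_simps)
    define F where "F = (\<lambda>W. - (\<Sum>k<l. (A k \<bullet> Qf S (t *\<^sub>R H + W)) *\<^sub>R D k))"
    have Fcont: "continuous_on (cball 0 \<rho>) F"
      unfolding F_def
      by (intro continuous_intros continuous_on_subset[OF continuous_Qf]) auto
    have Gb: "norm (t *\<^sub>R H + W) \<le> 2 * h * t" if "norm W \<le> \<rho>" for W
    proof -
      have "norm (t *\<^sub>R H + W) \<le> t * norm H + norm W"
        using norm_triangle_ineq[of "t *\<^sub>R H" W] t by simp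
      also have "\<dots> \<le> t * h + h * t" using that \<rho>ht h t by (intro add_mono mult_left_mono) auto
      finally show ?thesis by simp
    qed
    have Qb: "norm (Qf S (t *\<^sub>R H + W)) \<le> \<rho> \<and> KA * norm (Qf S (t *\<^sub>R H + W)) \<le> \<rho>"
      if "norm W \<le> \<rho>" for W
    proof -
      have "norm (t *\<^sub>R H + W) ^ 2 \<le> (2 * h * t) ^ 2"
        using Gb[OF that] by (intro power_mono) auto
      then have q1: "norm (Qf S (t *\<^sub>R H + W)) \<le> Kq * (2 * h * t) ^ 2"
        using Kq by (meson mult_left_mono less_imp_le order_trans)
      have r: "K * (2 * h * t) ^ 2 = \<rho>" unfolding \<rho>_def by (simp add: power2_eq_square algebra_simps)
      have "Kq * (2 * h * t) ^ 2 \<le> K * (2 * h * t) ^ 2"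
        using K by (intro mult_right_mono) auto
      moreover have "KA * (Kq * (2 * h * t) ^ 2) \<le> K * (2 * h * t) ^ 2"
        using K by (simp add: mult.assoc[symmetric] mult_right_mono)
      moreover have "KA * norm (Qf S (t *\<^sub>R H + W)) \<le> KA * (Kq * (2 * h * t) ^ 2)"
        using q1 KA by (rule mult_left_mono)
      ultimately show ?thesis using q1 r by linarith
    qed
    have Fmap: "F \<in> cball 0 \<rho> \<rightarrow> cball 0 \<rho>"
    proof
      fix W :: "real^'n^'m" assume "W \<in> cball 0 \<rho>"
      then have nW: "norm W \<le> \<rho>" by simp
      have "norm (F W) \<le> KA * norm (Qf S (t *\<^sub>R H + W))"
        unfolding F_def KA_def norm_minus_cancel by (rule norm_sum_inner_bound)
      then show "F W \<in> cball 0 \<rho>" using Qb[OF nW] by simp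
    qed
    obtain W where W: "W \<in> cball 0 \<rho>" "F W = W" using brouwer_ball[OF \<rho> Fcont Fmap] by blast
    have nW: "norm W \<le> \<rho>" using W(1) by simp
    define G where "G = t *\<^sub>R H + W"
    define Q where "Q = Qf S G"
    have Wdef: "W = - (\<Sum>k<l. (A k \<bullet> Q) *\<^sub>R D k)" using W(2) unfolding F_def Q_def G_def by simp
    have PW: "PT S W = W"
    proof -
      have "PT S W = - (\<Sum>k<l. (A k \<bullet> Q) *\<^sub>R PT S (D k))"
        unfolding Wdef by (simp add: linear_neg[OF linear_PT] linear_sum[OF linear_PT] linear_scale[OF linear_PT])
      also have "\<dots> = W" unfolding Wdef using PD by (metis (no_types, lifting) lessThan_iff sum.cong)
      finally show ?thesis .
    qed
    have AW: "A i \<bullet> W = - (A i \<bullet> Q)" if "i < l" for i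
      unfolding Wdef inner_minus_right using dual_sum[OF dual that] by simp
    have PG: "PT S G = G" unfolding G_def
      by (simp add: linear_add[OF linear_PT] linear_scale[OF linear_PT] PH PW)
    define W' where "W' = W + Q"
    have "S + t *\<^sub>R H + W' = S + PT S G + Qf S G" using PG unfolding W'_def Q_def by (simp add: G_def add.assoc)
    also have "\<dots> = (S + G) ** pinv S ** (S + G ** Jc S)" by (rule curve_identity[OF mS, symmetric])
    finally have "rank (S + t *\<^sub>R H + W') \<le> rank ((S + G) ** pinv S)"
      using rank_mul_le_left by metis
    also have "\<dots> \<le> rank (pinv S)" by (rule rank_mul_le_right)
    finally have r1: "rank (S + t *\<^sub>R H + W') \<le> rank (pinv S)" .
    have r2: "\<forall>i<l. A i \<bullet> (t *\<^sub>R H + W') = 0"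
      using AH AW unfolding W'_def by (simp add: inner_add_right)
    have "norm W' \<le> norm W + norm Q" unfolding W'_def by (rule norm_triangle_ineq)
    also have "\<dots> \<le> \<rho> + \<rho>" using nW Qb[OF nW] unfolding Q_def G_def by simp
    also have "\<dots> = C * t^2" unfolding \<rho>_def C_def by simp
    finally show ?thesis using r1 r2 by blast
  qed
  show ?thesis using \<delta> main by blast
qed


lemma diagm_idem: "diagm P ** diagm P = diagm P"
  unfolding diagm_left by (simp add: diagm_def vec_eq_iff)

lemma key_est:
  fixes S Z :: "real^'n^'m"
  assumes mS: "monomial S" and rk: "rank Z \<le> rank S"
    and Bv: "\<forall>(M::real^'n^'n) x. norm (M *v x) \<le> Bv * norm M * norm x"
    and Bw: "\<forall>(M::real^'n^'m) x. norm (M *v x) \<le> Bw * norm M * norm x"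
    and Bw0: "Bw \<ge> 0"
    and small: "Bv * norm (pinv S ** (Z - S)) \<le> 1/2"
    and p: "\<not> rs S p" and q: "\<not> cs S q"
  shows "\<bar>Z$p$q\<bar> \<le> 2 * Bw * Bv * norm (pinv S ** (Z - S)) * norm (Z - S)"
proof -
  define E where "E = pinv S ** (Z - S)"
  define Dn where "Dn = diagm (cs S)"
  define v :: "real^'n" where "v = axis q 1"
  have Ebd: "norm (E *v x) \<le> norm x / 2" for x
  proof -
    have "norm (E *v x) \<le> Bv * norm E * norm x" using Bv by blast
    also have "\<dots> \<le> 1/2 * norm x" using small unfolding E_def by (intro mult_right_mono) auto
    finally show ?thesis by simp
  qed
  have lowb: "norm x / 2 \<le> norm ((mat 1 + E) *v x)" for x
  proof -
    have "(mat 1 + E) *v x = x + E *v x" by (simp add: matrix_vector_mult_add_rdistrib)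
    moreover have "norm x \<le> norm (x + E *v x) + norm (E *v x)"
      using norm_triangle_ineq4[of "x + E *v x" "E *v x"] by simp
    ultimately show ?thesis using Ebd[of x] by simp
  qed
  have "inj ((*v) (mat 1 + E))"
    unfolding linear_injective_0[OF matrix_vector_mul_linear]
  proof (intro allI impI)
    fix x assume "(mat 1 + E) *v x = 0"
    then show "x = 0" using lowb[of x] by simp
  qed
  then obtain L where L: "L ** (mat 1 + E) = mat 1"
    using matrix_left_invertible_injective by blast
  have pZD: "pinv S ** Z ** Dn = (mat 1 + E) ** Dn"
  proof -
    have "pinv S ** Z = pinv S ** S + E" unfolding E_def by (simp add: mm_rsub)
    then have "pinv S ** Z ** Dn = diagm (cs S) ** Dn + E ** Dn"
      by (simp add: pinv_S[OF mS] mm_ladd)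
    then show ?thesis unfolding Dn_def by (simp add: diagm_idem mm_ladd)
  qed
  have "rank Z \<le> rank (Z ** Dn)"
  proof -
    have "rank S \<le> rank Dn" using rank_mul_le_right[of S Dn] S_diag_cs[OF mS] by (simp add: Dn_def)
    also have "Dn = L ** ((mat 1 + E) ** Dn)" by (simp add: matrix_mul_assoc L)
    also have "rank (L ** ((mat 1 + E) ** Dn)) \<le> rank ((mat 1 + E) ** Dn)" by (rule rank_mul_le_right)
    also have "(mat 1 + E) ** Dn = pinv S ** (Z ** Dn)" using pZD by (simp add: matrix_mul_assoc)
    also have "rank (pinv S ** (Z ** Dn)) \<le> rank (Z ** Dn)" by (rule rank_mul_le_right)
    finally show ?thesis using rk by simp
  qed
  have "range ((*v) (Z ** Dn)) = range ((*v) Z)"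
  proof (rule subspace_dim_equal)
    show "subspace (range ((*v) (Z ** Dn)))"
      by (rule linear_subspace_image[OF matrix_vector_mul_linear subspace_UNIV])
    show "subspace (range ((*v) Z))"
      by (rule linear_subspace_image[OF matrix_vector_mul_linear subspace_UNIV])
    show "range ((*v) (Z ** Dn)) \<subseteq> range ((*v) Z)"
      by (auto simp flip: matrix_vector_mul_assoc)
    show "dim (range ((*v) Z)) \<le> dim (range ((*v) (Z ** Dn)))"
      using \<open>rank Z \<le> rank (Z ** Dn)\<close> by (simp add: rank_dim_range)
  qed
  then obtain w where w: "Z *v v = (Z ** Dn) *v w" by (metis rangeE rangeI)
  define u where "u = Dn *v w"
  have Zu: "Z *v v = Z *v u" unfolding u_def w by (simp add: matrix_vector_mul_assoc)
  have Du: "Dn *v u = u" unfolding u_def by (simp add: matrix_vector_mul_assoc Dn_def diagm_idem)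
  have Sv: "S *v v = 0"
    using q unfolding v_def cs_def by (simp add: matrix_vector_mult_basis[of S q] column_def vec_eq_iff)
  have "pinv S *v (Z *v v) = E *v v"
  proof -
    have "pinv S *v (Z *v v) = (pinv S ** S + E) *v v"
      unfolding E_def by (simp add: matrix_vector_mul_assoc mm_rsub)
    also have "\<dots> = pinv S *v (S *v v) + E *v v"
      by (simp add: matrix_vector_mult_add_rdistrib matrix_vector_mul_assoc)
    finally show ?thesis using Sv by simp
  qed
  moreover have "pinv S *v (Z *v u) = (mat 1 + E) *v u"
  proof -
    have "pinv S *v (Z *v u) = (pinv S ** Z ** Dn) *v u"
      using Du by (metis matrix_vector_mul_assoc)
    also have "\<dots> = (mat 1 + E) *v (Dn *v u)" by (simp add: pZD matrix_vector_mul_assoc)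
    finally show ?thesis using Du by simp
  qed
  ultimately have eq: "(mat 1 + E) *v u = E *v v" using Zu by simp
  have nv: "norm v = 1" unfolding v_def by simp
  have nu: "norm u \<le> 2 * (Bv * norm E)"
  proof -
    have "norm u / 2 \<le> norm (E *v v)" using lowb[of u] eq by simp
    also have "\<dots> \<le> Bv * norm E * norm v" using Bv by blast
    finally show ?thesis using nv by simp
  qed
  have Su: "(S *v u) $ p = 0"
    using p unfolding rs_def by (simp add: matrix_vector_mult_def)
  have "Z$p$q = (Z *v v) $ p"
    unfolding v_def by (simp add: matrix_vector_mult_basis column_def)
  also have "\<dots> = ((Z - S) *v u) $ p + (S *v u) $ p"
    by (simp add: Zu matrix_vector_mult_diff_rdistrib)
  finally have Zpq: "Z$p$q = ((Z - S) *v u) $ p" using Su by simp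
  have "\<bar>Z$p$q\<bar> \<le> norm ((Z - S) *v u)" unfolding Zpq using component_le_norm_cart[of "(Z - S) *v u" p] by simp
  also have "\<dots> \<le> Bw * norm (Z - S) * norm u" using Bw by blast
  also have "\<dots> \<le> Bw * norm (Z - S) * (2 * (Bv * norm E))"
    using nu Bw0 by (intro mult_left_mono) auto
  finally show ?thesis unfolding E_def by (simp add: algebra_simps)
qed


lemma tangent_block:
  fixes S H :: "real^'n^'m" and Z :: "nat \<Rightarrow> real^'n^'m" and t :: "nat \<Rightarrow> real"
  assumes mS: "monomial S" and rk: "\<And>k. rank (Z k) \<le> rank S"
    and tpos: "\<And>k. t k > 0" and t0: "t \<longlonglongrightarrow> 0"
    and lim: "(\<lambda>k. (Z k - S) /\<^sub>R t k) \<longlonglongrightarrow> H"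
    and p: "\<not> rs S p" and q: "\<not> cs S q"
  shows "H$p$q = 0"
proof -
  obtain Bv where Bv: "Bv > 0" "\<forall>(M::real^'n^'n) x. norm (M *v x) \<le> Bv * norm M * norm x"
    using mv_bound by blast
  obtain Bw where Bw: "Bw > 0" "\<forall>(M::real^'n^'m) x. norm (M *v x) \<le> Bw * norm M * norm x"
    using mv_bound by blast
  obtain Bp where Bp: "Bp > 0" "\<forall>(M::real^'m^'n) (N::real^'n^'m). norm (M ** N) \<le> Bp * norm M * norm N"
    using mm_bound by blast
  define Hk where "Hk = (\<lambda>k. (Z k - S) /\<^sub>R t k)"
  have ZS: "Z k - S = t k *\<^sub>R Hk k" for k using tpos[of k] by (simp add: Hk_def)
  have nZS: "norm (Z k - S) = t k * norm (Hk k)" for k using ZS tpos[of k] by simp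
  have nH: "(\<lambda>k. norm (Hk k)) \<longlonglongrightarrow> norm H" unfolding Hk_def using lim by (rule tendsto_norm)
  define c where "c = Bp * norm (pinv S)"
  have c: "c \<ge> 0" unfolding c_def using Bp by simp
  have nE: "norm (pinv S ** (Z k - S)) \<le> c * norm (Z k - S)" for k
    using Bp unfolding c_def by (simp add: mult.assoc)
  have "(\<lambda>k. Bv * (c * (t k * norm (Hk k)))) \<longlonglongrightarrow> Bv * (c * (0 * norm H))"
    by (intro tendsto_intros t0 nH)
  then have "eventually (\<lambda>k. Bv * (c * (t k * norm (Hk k))) < 1/2) sequentially"
    by (intro order_tendstoD(2)) auto
  then have ev: "eventually (\<lambda>k. norm (Hk k $ p $ q) \<le> 2 * Bw * Bv * c * (t k * norm (Hk k) ^ 2)) sequentially"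
  proof eventually_elim
    case (elim k)
    have small: "Bv * norm (pinv S ** (Z k - S)) \<le> 1/2"
    proof -
      have "Bv * norm (pinv S ** (Z k - S)) \<le> Bv * (c * norm (Z k - S))"
        using nE Bv by (intro mult_left_mono) auto
      then show ?thesis using elim nZS[of k] by simp
    qed
    have est: "\<bar>Z k $p$q\<bar> \<le> 2 * Bw * Bv * norm (pinv S ** (Z k - S)) * norm (Z k - S)"
      by (rule key_est[OF mS rk Bv(2) Bw(2) _ small p q]) (use Bw in simp)
    have "2 * Bw * Bv * norm (pinv S ** (Z k - S)) * norm (Z k - S) \<le>
          2 * Bw * Bv * (c * norm (Z k - S)) * norm (Z k - S)"
      using Bw Bv nE by (intro mult_right_mono mult_left_mono) auto
    also have "\<dots> = 2 * Bw * Bv * c * (t k * norm (Hk k)) ^ 2" unfolding nZS by (simp add: power2_eq_square)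
    finally have est2: "\<bar>Z k $p$q\<bar> \<le> 2 * Bw * Bv * c * (t k * norm (Hk k)) ^ 2" using est by linarith
    have Spq: "S$p$q = 0" using p unfolding rs_def by blast
    have "Hk k $ p $ q = Z k $ p $ q / t k" unfolding Hk_def using Spq by (simp add: divide_inverse mult.commute)
    then have "norm (Hk k $ p $ q) = \<bar>Z k $p$q\<bar> / t k" using tpos[of k] by simp
    also have "\<dots> \<le> 2 * Bw * Bv * c * (t k * norm (Hk k)) ^ 2 / t k"
      using est2 tpos[of k] by (intro divide_right_mono) auto
    also have "\<dots> = 2 * Bw * Bv * c * (t k * norm (Hk k) ^ 2)"
      using tpos[of k] by (simp add: power2_eq_square field_simps)
    finally show ?case .
  qed
  have "(\<lambda>k. 2 * Bw * Bv * c * (t k * norm (Hk k) ^ 2)) \<longlonglongrightarrow> 2 * Bw * Bv * c * (0 * norm H ^ 2)"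
    by (intro tendsto_intros t0 nH)
  then have "(\<lambda>k. Hk k $ p $ q) \<longlonglongrightarrow> 0"
    using Lim_null_comparison[OF ev] by simp
  moreover have "(\<lambda>k. Hk k $ p $ q) \<longlonglongrightarrow> H $ p $ q"
    unfolding Hk_def by (intro tendsto_vec_nth lim)
  ultimately show ?thesis using LIMSEQ_unique by metis
qed


lemma tangent_line:
  fixes X \<Xi> :: "'a::real_normed_vector"
  assumes "\<And>t. 0 < t \<Longrightarrow> t \<le> 1 \<Longrightarrow> X + t *\<^sub>R \<Xi> \<in> \<Omega>"
  shows "\<Xi> \<in> bouligand_tangent \<Omega> X"
proof -
  define t where "t = (\<lambda>k::nat. 1 / (real k + 1))"
  have tpos: "\<forall>k. t k > 0" unfolding t_def by simp
  have t1: "t k \<le> 1" for k unfolding t_def by simp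
  have t0: "t \<longlonglongrightarrow> 0"
  proof -
    have "(\<lambda>n. 1 / real (Suc n)) \<longlonglongrightarrow> 0" using LIMSEQ_Suc[OF lim_inverse_n'] .
    then show ?thesis unfolding t_def by (simp add: add.commute)
  qed
  define Xk where "Xk = (\<lambda>k. X + t k *\<^sub>R \<Xi>)"
  have "\<forall>k. Xk k \<in> \<Omega>" unfolding Xk_def using assms tpos t1 by blast
  moreover have "Xk \<longlonglongrightarrow> X"
  proof -
    have "(\<lambda>k. X + t k *\<^sub>R \<Xi>) \<longlonglongrightarrow> X + 0 *\<^sub>R \<Xi>" by (intro tendsto_intros t0)
    then show ?thesis unfolding Xk_def by simp
  qed
  moreover have "(\<lambda>k. (Xk k - X) /\<^sub>R t k) \<longlonglongrightarrow> \<Xi>"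
  proof -
    have "(\<lambda>k. (Xk k - X) /\<^sub>R t k) = (\<lambda>k. \<Xi>)" proof
      fix k have "t k \<noteq> 0" using tpos by (metis less_irrefl)
      then show "(Xk k - X) /\<^sub>R t k = \<Xi>" unfolding Xk_def by simp
    qed
    then show ?thesis by simp
  qed
  ultimately show ?thesis unfolding bouligand_tangent_def using tpos t0 by blast
qed

lemma local_min_line:
  fixes f :: "'a::euclidean_space \<Rightarrow> real"
  assumes d: "(f has_derivative (\<lambda>H. g \<bullet> H)) (at X)" and lm: "local_min_on f K X"
    and line: "\<And>t. X + t *\<^sub>R \<Xi> \<in> K"
  shows "g \<bullet> \<Xi> = 0"
proof -
  have "g \<bullet> \<Xi> \<ge> 0"
    by (rule local_min_dir[OF d lm zero_less_one, where R="\<lambda>_. 0" and C=0]) (use line in simp)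
  moreover have "g \<bullet> (- \<Xi>) \<ge> 0"
    by (rule local_min_dir[OF d lm zero_less_one, where R="\<lambda>_. 0" and C=0])
       (use line[of "- _"] in simp)
  ultimately show ?thesis by simp
qed

lemma card_insert_bound:
  fixes P :: "'a::finite \<Rightarrow> bool"
  shows "card {j. P j \<or> j = q} \<le> card {j. P j} + 1"
proof -
  have "{j. P j \<or> j = q} = insert q {j. P j}" by auto
  then show ?thesis by (simp add: card_insert_if)
qed

context
  fixes em :: "nat \<Rightarrow> 'm::finite" and en :: "nat \<Rightarrow> 'n::finite" and S :: "real^'n^'m" and s :: nat
  assumes em: "bij_betw em {..<CARD('m)} UNIV" and en: "bij_betw en {..<CARD('n)} UNIV"
    and sn: "s \<le> CARD('n)" and nm: "CARD('n) \<le> CARD('m)"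
    and offd: "\<forall>i<CARD('m). \<forall>j<CARD('n). i \<noteq> j \<longrightarrow> S $ em i $ en j = 0"
    and pos: "\<forall>i<s. S $ em i $ en i > 0"
    and zer: "\<forall>i. s \<le> i \<longrightarrow> i < CARD('n) \<longrightarrow> S $ em i $ en i = 0"
begin

lemma S_nz: "S$p$q \<noteq> 0 \<longleftrightarrow> (\<exists>i<s. p = em i \<and> q = en i)"
proof
  assume nz: "S$p$q \<noteq> 0"
  obtain i where i: "i < CARD('m)" "p = em i" using em unfolding bij_betw_def by (metis UNIV_I imageE lessThan_iff)
  obtain j where j: "j < CARD('n)" "q = en j" using en unfolding bij_betw_def by (metis UNIV_I imageE lessThan_iff)
  have "i = j" using offd i j nz by blast
  moreover have "j < s" using zer i j nz \<open>i = j\<close> by (meson not_le)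
  ultimately show "\<exists>i<s. p = em i \<and> q = en i" using i j by blast
next
  assume "\<exists>i<s. p = em i \<and> q = en i"
  then show "S$p$q \<noteq> 0" using pos by fastforce
qed

lemma injm: "i < s \<Longrightarrow> i' < s \<Longrightarrow> em i = em i' \<Longrightarrow> i = i'"
  using em sn nm unfolding bij_betw_def inj_on_def by (meson lessThan_iff order_less_le_trans)
lemma injn: "i < s \<Longrightarrow> i' < s \<Longrightarrow> en i = en i' \<Longrightarrow> i = i'"
  using en sn unfolding bij_betw_def inj_on_def by (meson lessThan_iff order_less_le_trans)

lemma mono_S: "monomial S"
  unfolding monomial_def S_nz using injm injn by metis

lemma rs_iff: "rs S p \<longleftrightarrow> p \<in> em ` {..<s}"
  unfolding rs_def S_nz by auto
lemma cs_iff: "cs S q \<longleftrightarrow> q \<in> en ` {..<s}"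
  unfolding cs_def S_nz by auto

lemma card_cs: "card {q. cs S q} \<le> s"
proof -
  have "{q. cs S q} = en ` {..<s}" using cs_iff by auto
  then show ?thesis using card_image_le[of "{..<s}" en] by simp
qed
lemma card_rs: "card {p. rs S p} \<le> s"
proof -
  have "{p. rs S p} = em ` {..<s}" using rs_iff by auto
  then show ?thesis using card_image_le[of "{..<s}" em] by simp
qed

lemma T_mat_eq: "T_mat em en s U V Ai = PT S (Psi U V Ai)"
  unfolding T_mat_def PT_def Psi_def using rs_iff cs_iff by (auto simp: vec_eq_iff)

lemma R_mat_eq: "R_mat em en s U V Ai = Psi U V Ai ** diagm (cs S)"
  unfolding R_mat_def Psi_def diagm_right using cs_iff by (auto simp: vec_eq_iff)

lemma rank_pinv: "rank (pinv S) \<le> s"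
proof -
  have "rank (pinv S) \<le> card {p. rs S p}"
    by (rule rank_cols) (auto simp: pinv_def rs_def)
  then show ?thesis using card_rs by linarith
qed

end


context
  fixes f :: "real^'n^'m \<Rightarrow> real"
    and A :: "nat \<Rightarrow> real^'n^'m" and b :: "nat \<Rightarrow> real" and l r s :: nat
    and X :: "real^'n^'m" and U :: "real^'m^'m" and S :: "real^'n^'m" and V :: "real^'n^'n"
    and em :: "nat \<Rightarrow> 'm" and en :: "nat \<Rightarrow> 'n"
  assumes dims: "r < CARD('n)" "CARD('n) \<le> CARD('m)"
    and f_C1: "cont_diff f"
    and em: "bij_betw em {..<CARD('m)} UNIV" and en: "bij_betw en {..<CARD('n)} UNIV"
    and X_feas: "X \<in> feas_L l A b \<inter> rank_le r"
    and s_def: "s = rank X"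
    and svd: "is_svd em en X U S V s"
begin

lemma sr: "s \<le> r" using X_feas s_def unfolding rank_le_def by auto
lemma sn: "s \<le> CARD('n)" using sr dims by linarith
lemma oU: "orthogonal_matrix U" using svd unfolding is_svd_def by blast
lemma oV: "orthogonal_matrix V" using svd unfolding is_svd_def by blast
lemma XPhi: "X = Phi U V S" using svd unfolding is_svd_def Phi_def by blast
lemma svd_parts:
  "\<forall>i<CARD('m). \<forall>j<CARD('n). i \<noteq> j \<longrightarrow> S $ em i $ en j = 0"
  "\<forall>i<s. S $ em i $ en i > 0"
  "\<forall>i. s \<le> i \<longrightarrow> i < CARD('n) \<longrightarrow> S $ em i $ en i = 0"
  using svd unfolding is_svd_def by blast+

lemmas Sfacts = S_nz[OF em en sn dims(2) svd_parts] mono_S[OF em en sn dims(2) svd_parts]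
  rs_iff[OF em en sn dims(2) svd_parts] cs_iff[OF em en sn dims(2) svd_parts]
  card_cs[OF em en sn dims(2) svd_parts] card_rs[OF em en sn dims(2) svd_parts]
  T_mat_eq[OF em en sn dims(2) svd_parts] R_mat_eq[OF em en sn dims(2) svd_parts]
  rank_pinv[OF em en sn dims(2) svd_parts]

lemma mS: "monomial S" by (rule Sfacts(2))

lemma gD: "(f has_derivative (\<lambda>H. grad f X \<bullet> H)) (at X)"
  using f_C1 unfolding cont_diff_def by (blast intro: grad_has_derivative)

lemma rank_S: "s \<le> rank S"
  using s_def XPhi rank_Phi[OF oU oV, of S] by simp

lemma inner_A_Phi: "A i \<bullet> Phi U V Z = Psi U V (A i) \<bullet> Z"
  using Psi_inner[OF oU oV] by simp

lemma feasS: "i < l \<Longrightarrow> Psi U V (A i) \<bullet> S = b i"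
  using X_feas XPhi inner_A_Phi unfolding feas_L_def by auto

lemma memK:
  assumes "rank Z \<le> r" "\<forall>i<l. Psi U V (A i) \<bullet> Z = b i"
  shows "Phi U V Z \<in> feas_L l A b \<inter> rank_le r"
  using assms rank_Phi[OF oU oV, of Z] inner_A_Phi unfolding feas_L_def rank_le_def by auto

lemma Phi_add: "Phi U V (Y + Z) = Phi U V Y + Phi U V Z"
  by (rule linear_add[OF linear_Phi[OF oU oV]])
lemma Phi_scale: "Phi U V (c *\<^sub>R Z) = c *\<^sub>R Phi U V Z"
  by (rule linear_scale[OF linear_Phi[OF oU oV]])
lemma Phi_diff: "Phi U V (Y - Z) = Phi U V Y - Phi U V Z"
  by (rule linear_diff[OF linear_Phi[OF oU oV]])
lemma Phi_sum: "Phi U V (\<Sum>i<l. c i *\<^sub>R M i) = (\<Sum>i<l. c i *\<^sub>R Phi U V (M i))"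
  by (simp add: linear_sum[OF linear_Phi[OF oU oV]] linear_scale[OF linear_Phi[OF oU oV]])
lemma Phi_neg: "Phi U V (- Z) = - Phi U V Z"
  by (rule linear_neg[OF linear_Phi[OF oU oV]])
lemma Psi_diff: "Psi U V (Y - Z) = Psi U V Y - Psi U V Z"
  by (rule linear_diff[OF linear_Psi[OF oU oV]])


lemma lagr_eq: "lagr_grad f l A y X = grad f X + (\<Sum>i<l. y i *\<^sub>R A i)"
  by (simp add: lagr_grad_def)

lemma inner_lagr_zero:
  assumes "\<forall>i<l. A i \<bullet> \<Xi> = 0"
  shows "lagr_grad f l A y X \<bullet> \<Xi> = grad f X \<bullet> \<Xi>"
  using assms by (simp add: lagr_eq inner_add_left inner_sum_left)

lemma partC:
  assumes cv: "convex_on UNIV f" and Fs: "F_stationary f l A b r X"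
  shows "\<forall>Y \<in> feas_L l A b \<inter> M_Gamma en s U V. f X \<le> f Y"
proof
  fix Y assume Y: "Y \<in> feas_L l A b \<inter> M_Gamma en s U V"
  obtain y where nrm: "- lagr_grad f l A y X \<in> frechet_normal (rank_le r) X"
    using Fs unfolding F_stationary_def by blast
  obtain B where B: "Y = U ** B ** transpose V" "\<forall>p q. q \<notin> en ` {..<s} \<longrightarrow> B $ p $ q = 0"
    using Y unfolding M_Gamma_def by blast
  have YB: "Y = Phi U V B" using B(1) by (simp add: Phi_def)
  define \<Xi> where "\<Xi> = Y - X"
  have XiB: "\<Xi> = Phi U V (B - S)" unfolding \<Xi>_def YB XPhi Phi_diff ..
  have "\<Xi> \<in> bouligand_tangent (rank_le r) X"
  proof (rule tangent_line)
    fix t :: real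
    have "X + t *\<^sub>R \<Xi> = Phi U V (S + t *\<^sub>R (B - S))"
      unfolding XiB XPhi by (simp add: Phi_add Phi_scale)
    moreover have "rank (S + t *\<^sub>R (B - S)) \<le> card {j. cs S j}"
    proof (rule rank_cols)
      fix i j assume nj: "\<not> cs S j"
      then have "j \<notin> en ` {..<s}" using Sfacts(4) by blast
      then show "(S + t *\<^sub>R (B - S))$i$j = 0" using nj B(2) by (simp add: cs_def)
    qed
    ultimately show "X + t *\<^sub>R \<Xi> \<in> rank_le r"
      unfolding rank_le_def using rank_Phi[OF oU oV, of "S + t *\<^sub>R (B - S)"] Sfacts(5) sr by simp
  qed
  then have "- lagr_grad f l A y X \<bullet> \<Xi> \<le> 0" using nrm unfolding frechet_normal_def by blast
  moreover have "\<forall>i<l. A i \<bullet> \<Xi> = 0"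
    using Y X_feas unfolding \<Xi>_def feas_L_def by (simp add: inner_diff_right)
  ultimately have "grad f X \<bullet> \<Xi> \<ge> 0" using inner_lagr_zero by simp
  then show "f X \<le> f Y" using convex_grad_ineq[OF cv gD, of Y] unfolding \<Xi>_def by linarith
qed

lemma partD:
  assumes cv: "convex_on UNIV f" and Fs: "F_stationary f l A b r X" and slr: "s < r"
  shows "global_min_on f (feas_L l A b \<inter> rank_le r) X"
proof -
  obtain y where nrm: "- lagr_grad f l A y X \<in> frechet_normal (rank_le r) X"
    using Fs unfolding F_stationary_def by blast
  define w where "w = lagr_grad f l A y X"
  have "Psi U V w $ p $ q = 0" for p q
  proof -
    define E :: "real^'n^'m" where "E = emat p q"
    have tg: "Phi U V (c *\<^sub>R E) \<in> bouligand_tangent (rank_le r) X" for c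
    proof (rule tangent_line)
      fix t :: real
      have "X + t *\<^sub>R Phi U V (c *\<^sub>R E) = Phi U V (S + (t * c) *\<^sub>R E)"
        unfolding XPhi by (simp add: Phi_add Phi_scale)
      moreover have "rank (S + (t * c) *\<^sub>R E) \<le> card {j. cs S j \<or> j = q}"
        by (rule rank_cols) (auto simp: cs_def E_def emat_def)
      moreover have "card {j. cs S j \<or> j = q} \<le> r"
        using card_insert_bound[of "cs S" q] Sfacts(5) slr by linarith
      ultimately show "X + t *\<^sub>R Phi U V (c *\<^sub>R E) \<in> rank_le r"
        unfolding rank_le_def using rank_Phi[OF oU oV, of "S + (t * c) *\<^sub>R E"] by simp
    qed
    have "- w \<bullet> Phi U V (1 *\<^sub>R E) \<le> 0" using nrm tg[of 1] unfolding frechet_normal_def w_def by blast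
    moreover have "- w \<bullet> Phi U V ((-1) *\<^sub>R E) \<le> 0" using nrm tg[of "-1"] unfolding frechet_normal_def w_def by blast
    ultimately have "w \<bullet> Phi U V E = 0" by (simp add: Phi_scale Phi_neg)
    then show ?thesis using Psi_inner[OF oU oV, of w E] inner_emat[of "Psi U V w" p q] by (simp add: E_def)
  qed
  then have "Psi U V w = 0" by (simp add: vec_eq_iff)
  then have "w = 0" using Phi_Psi[OF oU oV, of w] linear_0[OF linear_Phi[OF oU oV]] by simp
  then have g: "grad f X = - (\<Sum>i<l. y i *\<^sub>R A i)" unfolding w_def lagr_eq by (simp add: eq_neg_iff_add_eq_0)
  have "f X \<le> f Y" if Y: "Y \<in> feas_L l A b \<inter> rank_le r" for Y
  proof -
    have "\<forall>i<l. A i \<bullet> (Y - X) = 0"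
      using Y X_feas unfolding feas_L_def by (simp add: inner_diff_right)
    then have "grad f X \<bullet> (Y - X) = 0" unfolding g by (simp add: inner_sum_left)
    then show ?thesis using convex_grad_ineq[OF cv gD, of Y] by linarith
  qed
  then show ?thesis unfolding global_min_on_def using X_feas by blast
qed


lemma stationary_of_zero:
  assumes "lagr_grad f l A y X = 0"
  shows "F_stationary f l A b r X"
proof -
  have "- lagr_grad f l A y X \<in> frechet_normal (rank_le r) X"
    using assms unfolding frechet_normal_def by simp
  then show ?thesis using X_feas unfolding F_stationary_def by blast
qed

lemma diag_subspace: "subspace {M :: real^'n^'m. M ** diagm P = M}"
  unfolding subspace_def by (auto simp: mm_ladd mm_lmul)

lemma partA:
  assumes lm: "local_min_on f (feas_L l A b \<inter> rank_le r) X" and slr: "s < r"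
    and li: "lin_indep_family l (\<lambda>i. R_mat em en s U V (A i))"
  shows "F_stationary f l A b r X"
proof -
  define g where "g = grad f X"
  define g' where "g' = Psi U V g"
  define A' where "A' = (\<lambda>i. Psi U V (A i))"
  define Dn where "Dn = diagm (cs S)"
  have step1: "g' \<bullet> G = 0" if G: "\<forall>i j. \<not> (cs S j \<or> j = q) \<longrightarrow> G$i$j = 0"
    and AG: "\<forall>i<l. A' i \<bullet> G = 0" for G q
  proof -
    have "g \<bullet> Phi U V G = 0"
    proof (rule local_min_line[OF gD[folded g_def] lm])
      fix t :: real
      have "X + t *\<^sub>R Phi U V G = Phi U V (S + t *\<^sub>R G)" by (simp add: XPhi Phi_add Phi_scale)
      moreover have "rank (S + t *\<^sub>R G) \<le> r"
      proof -
        have "rank (S + t *\<^sub>R G) \<le> card {j. cs S j \<or> j = q}"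
          by (rule rank_cols) (use G in \<open>auto simp: cs_def\<close>)
        moreover have "card {j. cs S j \<or> j = q} \<le> r"
          using card_insert_bound[of "cs S" q] Sfacts(5) slr by linarith
        ultimately show ?thesis by linarith
      qed
      moreover have "\<forall>i<l. Psi U V (A i) \<bullet> (S + t *\<^sub>R G) = b i"
        using feasS AG by (simp add: A'_def inner_add_right)
      ultimately show "X + t *\<^sub>R Phi U V G \<in> feas_L l A b \<inter> rank_le r" using memK by simp
    qed
    then show ?thesis using Psi_inner[OF oU oV, of g G] by (simp add: g'_def)
  qed
  have cols_D: "\<forall>i j. \<not> (cs S j \<or> j = q) \<longrightarrow> (x ** Dn)$i$j = 0" for x :: "real^'n^'m" and q
    by (simp add: Dn_def diagm_right)
  have "\<exists>c. g' ** Dn = (\<Sum>i<l. c i *\<^sub>R (A' i ** Dn))"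
  proof (rule LA_orth)
    fix x assume x: "\<forall>i<l. (A' i ** Dn) \<bullet> x = 0"
    have xD: "\<forall>i<l. A' i \<bullet> (x ** Dn) = 0" using x by (simp add: inner_mult_right Dn_def)
    have "g' \<bullet> (x ** Dn) = 0" by (rule step1[OF cols_D xD])
    then show "(g' ** Dn) \<bullet> x = 0" by (simp add: inner_mult_right Dn_def)
  qed
  then obtain c where c: "g' ** Dn = (\<Sum>i<l. c i *\<^sub>R (A' i ** Dn))" by blast
  define h where "h = g' - (\<Sum>i<l. c i *\<^sub>R A' i)"
  have hD: "h ** Dn = 0" unfolding h_def by (simp add: mm_lsub mm_lsum c)
  have li': "lin_indep_family l (\<lambda>i. A' i ** Dn)"
    using li unfolding A'_def Dn_def by (simp add: Sfacts(8))
  obtain D where D: "\<forall>k<l. D k \<in> span ((\<lambda>i. A' i ** Dn) ` {..<l}) \<and>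
      (\<forall>i<l. (A' i ** Dn) \<bullet> D k = (if i = k then 1 else 0))"
    using dual_family[OF li'] by blast
  have DD: "D k ** Dn = D k" if k: "k < l" for k
  proof -
    have "(\<lambda>i. A' i ** Dn) ` {..<l} \<subseteq> {M. M ** Dn = M}"
      by (auto simp: Dn_def diagm_idem simp flip: matrix_mul_assoc)
    then have "span ((\<lambda>i. A' i ** Dn) ` {..<l}) \<subseteq> {M. M ** Dn = M}"
      unfolding Dn_def by (rule span_minimal[OF _ diag_subspace])
    then show ?thesis using D k by blast
  qed
  have dual': "\<forall>i<l. \<forall>k<l. A' i \<bullet> D k = (if i = k then 1 else 0)"
  proof (intro allI impI)
    fix i k assume ik: "i < l" "k < l"
    have "A' i \<bullet> D k = A' i \<bullet> (D k ** Dn)" using DD[OF ik(2)] by simp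
    also have "\<dots> = (A' i ** Dn) \<bullet> D k" by (simp add: inner_mult_right Dn_def)
    finally show "A' i \<bullet> D k = (if i = k then 1 else 0)" using D ik by simp
  qed
  have "h$p$q = 0" for p q
  proof (cases "cs S q")
    case True
    have "(h ** Dn)$p$q = h$p$q" using True by (simp add: Dn_def diagm_right)
    then show ?thesis using hD by simp
  next
    case False
    define M :: "real^'n^'m" where "M = emat p q"
    define Z where "Z = (\<Sum>k<l. (A' k \<bullet> M) *\<^sub>R D k)"
    have ZD: "Z ** Dn = Z" unfolding Z_def mm_lsum by (intro sum.cong refl) (simp add: DD)
    have AZ: "A' i \<bullet> Z = A' i \<bullet> M" if "i < l" for i
      unfolding Z_def by (rule dual_sum[OF dual' that])
    define G where "G = M - Z"
    have Gc: "\<forall>i j. \<not> (cs S j \<or> j = q) \<longrightarrow> G$i$j = 0"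
    proof (intro allI impI)
      fix i j assume j: "\<not> (cs S j \<or> j = q)"
      have "Z$i$j = (Z ** Dn)$i$j" using ZD by simp
      also have "\<dots> = 0" using j by (simp add: Dn_def diagm_right)
      finally show "G$i$j = 0" using j by (simp add: G_def M_def emat_def)
    qed
    have AG: "\<forall>i<l. A' i \<bullet> G = 0" using AZ by (simp add: G_def inner_diff_right)
    have gG: "g' \<bullet> G = 0" by (rule step1[OF Gc AG])
    have hG: "h \<bullet> G = 0" using gG AG unfolding h_def by (simp add: inner_diff_left inner_sum_left)
    have hZ: "h \<bullet> Z = 0"
    proof -
      have "h \<bullet> Z = h \<bullet> (Z ** Dn)" using ZD by simp
      also have "\<dots> = (h ** Dn) \<bullet> Z" by (simp add: inner_mult_right Dn_def)
      finally show ?thesis using hD by simp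
    qed
    have "h \<bullet> M = 0" using hG hZ unfolding G_def by (simp add: inner_diff_right)
    then show ?thesis unfolding M_def by (simp add: inner_emat)
  qed
  then have "h = 0" by (simp add: vec_eq_iff)
  then have g': "g' = (\<Sum>i<l. c i *\<^sub>R A' i)" unfolding h_def by simp
  have "g = Phi U V g'" unfolding g'_def using Phi_Psi[OF oU oV] by simp
  also have "\<dots> = (\<Sum>i<l. c i *\<^sub>R A i)" unfolding g' Phi_sum A'_def using Phi_Psi[OF oU oV] by simp
  finally have "lagr_grad f l A (\<lambda>i. - c i) X = 0"
    unfolding lagr_eq g_def by (simp add: sum_negf)
  then show ?thesis by (rule stationary_of_zero)
qed


lemma rank_Psi: "rank (Psi U V Y) \<le> rank Y"
  unfolding Psi_def using rank_mul_le_left rank_mul_le_right order_trans by metis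

lemma PT_subspace: "subspace {M :: real^'n^'m. PT S M = M}"
  unfolding subspace_def
  by (auto simp: linear_add[OF linear_PT] linear_scale[OF linear_PT] linear_0[OF linear_PT])

lemma partB:
  assumes lm: "local_min_on f (feas_L l A b \<inter> rank_le r) X" and seq: "s = r"
    and li: "lin_indep_family l (\<lambda>i. T_mat em en s U V (A i))"
  shows "F_stationary f l A b r X"
proof -
  define g where "g = grad f X"
  define g' where "g' = Psi U V g"
  define A' where "A' = (\<lambda>i. Psi U V (A i))"
  have li': "lin_indep_family l (\<lambda>i. PT S (A' i))"
    using li unfolding A'_def by (simp add: Sfacts(7))
  obtain D where D: "\<forall>k<l. D k \<in> span ((\<lambda>i. PT S (A' i)) ` {..<l}) \<and>
      (\<forall>i<l. PT S (A' i) \<bullet> D k = (if i = k then 1 else 0))"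
    using dual_family[OF li'] by blast
  have PD: "\<forall>k<l. PT S (D k) = D k"
  proof (intro allI impI)
    fix k assume k: "k < l"
    have "(\<lambda>i. PT S (A' i)) ` {..<l} \<subseteq> {M. PT S M = M}" by auto
    then have "span ((\<lambda>i. PT S (A' i)) ` {..<l}) \<subseteq> {M. PT S M = M}"
      by (rule span_minimal[OF _ PT_subspace])
    then show "PT S (D k) = D k" using D k by blast
  qed
  have dual': "\<forall>i<l. \<forall>k<l. A' i \<bullet> D k = (if i = k then 1 else 0)"
  proof (intro allI impI)
    fix i k assume ik: "i < l" "k < l"
    have "A' i \<bullet> D k = A' i \<bullet> PT S (D k)" using PD ik by simp
    also have "\<dots> = PT S (A' i) \<bullet> D k" by (simp add: PT_adj)
    finally show "A' i \<bullet> D k = (if i = k then 1 else 0)" using D ik by simp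
  qed
  have dir: "g \<bullet> Phi U V H \<ge> 0" if PH: "PT S H = H" and AH: "\<forall>i<l. A' i \<bullet> H = 0" for H
  proof -
    obtain \<delta> C where \<delta>: "\<delta> > 0" and cur: "\<forall>t. 0 < t \<and> t < \<delta> \<longrightarrow> (\<exists>W'. rank (S + t *\<^sub>R H + W') \<le> rank (pinv S) \<and>
            (\<forall>i<l. A' i \<bullet> (t *\<^sub>R H + W') = 0) \<and> norm W' \<le> C * t^2)"
      using curve_exists[OF mS PH PD dual' AH] by blast
    define Wf where "Wf = (\<lambda>t. SOME W'. rank (S + t *\<^sub>R H + W') \<le> rank (pinv S) \<and>
            (\<forall>i<l. A' i \<bullet> (t *\<^sub>R H + W') = 0) \<and> norm W' \<le> C * t^2)"
    show ?thesis
    proof (rule local_min_dir[OF gD[folded g_def] lm \<delta>, where R = "\<lambda>t. Phi U V (Wf t)" and C = C])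
      fix t :: real assume t: "0 < t" "t < \<delta>"
      have W: "rank (S + t *\<^sub>R H + Wf t) \<le> rank (pinv S) \<and>
            (\<forall>i<l. A' i \<bullet> (t *\<^sub>R H + Wf t) = 0) \<and> norm (Wf t) \<le> C * t^2"
        unfolding Wf_def by (rule someI_ex) (use cur t in blast)
      have eq: "X + t *\<^sub>R Phi U V H + Phi U V (Wf t) = Phi U V (S + t *\<^sub>R H + Wf t)"
        by (simp add: XPhi Phi_add Phi_scale)
      have "rank (S + t *\<^sub>R H + Wf t) \<le> r" using W Sfacts(9) seq by linarith
      moreover have "\<forall>i<l. Psi U V (A i) \<bullet> (S + t *\<^sub>R H + Wf t) = b i"
        using W feasS unfolding A'_def by (simp add: inner_add_right add.assoc)
      ultimately have "Phi U V (S + t *\<^sub>R H + Wf t) \<in> feas_L l A b \<inter> rank_le r" by (rule memK)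
      then show "X + t *\<^sub>R Phi U V H + Phi U V (Wf t) \<in> feas_L l A b \<inter> rank_le r \<and>
            norm (Phi U V (Wf t)) \<le> C * t^2"
        using eq W norm_Phi[OF oU oV] by simp
    qed
  qed
  have step1: "g' \<bullet> H = 0" if PH: "PT S H = H" and AH: "\<forall>i<l. A' i \<bullet> H = 0" for H
  proof -
    have "g \<bullet> Phi U V H \<ge> 0" by (rule dir[OF PH AH])
    moreover have "g \<bullet> Phi U V (- H) \<ge> 0"
      by (rule dir) (use PH AH in \<open>simp_all add: linear_neg[OF linear_PT]\<close>)
    ultimately have "g \<bullet> Phi U V H = 0" by (simp add: Phi_neg)
    then show ?thesis using Psi_inner[OF oU oV, of g H] by (simp add: g'_def)
  qed
  have "\<exists>c. PT S g' = (\<Sum>i<l. c i *\<^sub>R PT S (A' i))"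
  proof (rule LA_orth)
    fix x assume x: "\<forall>i<l. PT S (A' i) \<bullet> x = 0"
    have "g' \<bullet> PT S x = 0"
      by (rule step1) (use x in \<open>simp_all add: PT_adj\<close>)
    then show "PT S g' \<bullet> x = 0" by (simp add: PT_adj)
  qed
  then obtain c where c: "PT S g' = (\<Sum>i<l. c i *\<^sub>R PT S (A' i))" by blast
  define N where "N = g' - (\<Sum>i<l. c i *\<^sub>R A' i)"
  have PN: "PT S N = 0" unfolding N_def
    by (simp add: linear_diff[OF linear_PT] linear_sum[OF linear_PT] linear_scale[OF linear_PT] c)
  have wN: "lagr_grad f l A (\<lambda>i. - c i) X = Phi U V N"
  proof -
    have "Phi U V N = g - (\<Sum>i<l. c i *\<^sub>R A i)"
      unfolding N_def Phi_diff Phi_sum g'_def A'_def using Phi_Psi[OF oU oV] by simp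
    then show ?thesis unfolding lagr_eq g_def by (simp add: sum_negf)
  qed
  have "- lagr_grad f l A (\<lambda>i. - c i) X \<in> frechet_normal (rank_le r) X"
    unfolding frechet_normal_def
  proof (intro CollectI ballI)
    fix \<Xi> assume "\<Xi> \<in> bouligand_tangent (rank_le r) X"
    then obtain Xk t where Xk: "\<forall>k. Xk k \<in> rank_le r" and tpos: "\<forall>k. t k > (0::real)" and t0: "t \<longlonglongrightarrow> 0"
      and lim: "(\<lambda>k. (Xk k - X) /\<^sub>R t k) \<longlonglongrightarrow> \<Xi>"
      unfolding bouligand_tangent_def by blast
    define Z where "Z = (\<lambda>k. Psi U V (Xk k))"
    have rkZ: "rank (Z k) \<le> rank S" for k
    proof -
      have "rank (Xk k) \<le> r" using Xk unfolding rank_le_def by blast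
      then show ?thesis using rank_Psi[of "Xk k"] rank_S seq unfolding Z_def by linarith
    qed
    have bl: "bounded_linear (Psi U V)" using linear_Psi[OF oU oV] linear_conv_bounded_linear by blast
    have SX: "Psi U V X = S" using XPhi Psi_Phi[OF oU oV] by simp
    have "(\<lambda>k. Psi U V ((Xk k - X) /\<^sub>R t k)) \<longlonglongrightarrow> Psi U V \<Xi>"
      by (rule bounded_linear.tendsto[OF bl lim])
    moreover have "Psi U V ((Xk k - X) /\<^sub>R t k) = (Z k - S) /\<^sub>R t k" for k
      unfolding Z_def using linear_scale[OF linear_Psi[OF oU oV]] Psi_diff SX by simp
    ultimately have limZ: "(\<lambda>k. (Z k - S) /\<^sub>R t k) \<longlonglongrightarrow> Psi U V \<Xi>" by simp
    have blk: "Psi U V \<Xi> $ p $ q = 0" if "\<not> rs S p" "\<not> cs S q" for p q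
      by (rule tangent_block[OF mS rkZ _ t0 limZ that]) (use tpos in blast)
    have "N \<bullet> Psi U V \<Xi> = 0"
    proof -
      have "N$p$q * Psi U V \<Xi> $ p $ q = 0" for p q
      proof (cases "rs S p \<or> cs S q")
        case True
        then have "N$p$q = (PT S N)$p$q" by (simp add: PT_def)
        then show ?thesis using PN by simp
      next
        case False then show ?thesis using blk by simp
      qed
      then show ?thesis unfolding inner_mat by (intro sum.neutral ballI) auto
    qed
    then show "- lagr_grad f l A (\<lambda>i. - c i) X \<bullet> \<Xi> \<le> 0"
      unfolding wN using Phi_inner[OF oU oV, of N \<Xi>] by simp
  qed
  then show ?thesis using X_feas unfolding F_stationary_def by blast
qed

end


theorem theorem4p1:
  fixes f :: "real^'n^'m \<Rightarrow> real"
    and A :: "nat \<Rightarrow> real^'n^'m" and b :: "nat \<Rightarrow> real" and l r s :: nat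
    and X :: "real^'n^'m" and U :: "real^'m^'m" and S :: "real^'n^'m" and V :: "real^'n^'n"
    and em :: "nat \<Rightarrow> 'm" and en :: "nat \<Rightarrow> 'n"
  assumes dims: "r < CARD('n)" "CARD('n) \<le> CARD('m)"
    and f_C1: "cont_diff f"
    and em: "bij_betw em {..<CARD('m)} UNIV" and en: "bij_betw en {..<CARD('n)} UNIV"
    and X_feas: "X \<in> feas_L l A b \<inter> rank_le r"
    and s_def: "s = rank X"
    and svd: "is_svd em en X U S V s"
  shows
    "(local_min_on f (feas_L l A b \<inter> rank_le r) X \<longrightarrow>
       ((s = r \<and> lin_indep_family l (\<lambda>i. T_mat em en s U V (A i))) \<or>
        (s < r \<and> lin_indep_family l (\<lambda>i. R_mat em en s U V (A i)))) \<longrightarrow>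
       F_stationary f l A b r X)
   \<and> (convex_on UNIV f \<longrightarrow> F_stationary f l A b r X \<longrightarrow>
       (s = r \<longrightarrow> (\<forall>Y \<in> feas_L l A b \<inter> M_Gamma en s U V. f X \<le> f Y)) \<and>
       (s < r \<longrightarrow> global_min_on f (feas_L l A b \<inter> rank_le r) X))"
  proof (intro conjI impI)
  note ctx = dims f_C1 em en X_feas s_def svd
  assume lm: "local_min_on f (feas_L l A b \<inter> rank_le r) X"
  assume disj: "(s = r \<and> lin_indep_family l (\<lambda>i. T_mat em en s U V (A i))) \<or>
        (s < r \<and> lin_indep_family l (\<lambda>i. R_mat em en s U V (A i)))"
  then show "F_stationary f l A b r X"
  proof
    assume h: "s = r \<and> lin_indep_family l (\<lambda>i. T_mat em en s U V (A i))"
    show ?thesis by (rule partB[OF ctx lm]) (use h in auto)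
  next
    assume h: "s < r \<and> lin_indep_family l (\<lambda>i. R_mat em en s U V (A i))"
    show ?thesis by (rule partA[OF ctx lm]) (use h in auto)
  qed
next
  note ctx = dims f_C1 em en X_feas s_def svd
  assume cv: "convex_on UNIV f" and Fs: "F_stationary f l A b r X"
  show "\<forall>Y \<in> feas_L l A b \<inter> M_Gamma en s U V. f X \<le> f Y"
    by (rule partC[OF ctx cv Fs])
next
  note ctx = dims f_C1 em en X_feas s_def svd
  assume cv: "convex_on UNIV f" and Fs: "F_stationary f l A b r X" and slr: "s < r"
  show "global_min_on f (feas_L l A b \<inter> rank_le r) X"
    by (rule partD[OF ctx cv Fs slr])
qed

end
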